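(* Let $g\ge1$. Put $u_1=0$, and let $u_2,\dots,u_{2g+1}$ be pairwise distinct nonzero complex numbers varying in a small open set. Consider the hyperelliptic curve $v^2=u\prod_{i=2}^{2g+1}(u-u_i)$. Let $\{\gamma_k\}_{k=1}^{2g}$ be a basis of its first homology, represented by cycles avoiding the branch points and infinity and transported continuously as the $u_j$ vary. Let $\gamma=\sum_{k=1}^{2g}c_k\gamma_k$ with constants $c_k\in\mathbb{C}$. Define $$a_1=-\oint_\gamma\frac{du}{v},\qquad a_i=\oint_\gamma\frac{du}{v}+u_i\oint_\gamma\frac{du}{(u-u_i)v}\quad(2\le i\le 2g+1).$$ Set $\alpha_1=1/4$, $\alpha_i=-1/4$ for $2\le i\le 2g+1$, and $\alpha_\infty=(2g-1)/4$. Then for all $i\in\{1,\dots,2g+1\}$ and $j\in\{2,\dots,2g+1\}$ with $i\neq j$, $$\frac{\partial a_i}{\partial u_j}=\frac{2(\alpha_j a_i-\alpha_i a_j)}{u_j-u_i},$$ and moreover $\sum_{i=1}^{2g+1}a_i=0$. Explicitly, these relations read $$\frac{\partial a_1}{\partial u_j}=-\frac{a_1+a_j}{2u_j},\qquad \frac{\partial a_i}{\partial u_j}=\frac{a_j-a_i}{2(u_j-u_i)}\quad (i,j\ge2,\ i\ne j).$$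
   Context: These equations are the upper triangular reduction of the rank two Schlesinger system in which $u_1=0$ is fixed. The residue matrices are $A^{(i)}=\begin{pmatrix}\alpha_i & a_i\\ 0&-\alpha_i\end{pmatrix}$, and $A^{(\infty)}=\mathrm{diag}(\alpha_\infty,-\alpha_\infty)$. *)

theory Defs
  imports "HOL-Analysis.Analysis"
begin

text \<open>Parameters: a function u :: nat => complex, of which only the coordinates
  u 2, ..., u (2g+1) are used; the first branch point u_1 is fixed to 0.\<close>

definition branch :: "(nat \<Rightarrow> complex) \<Rightarrow> nat \<Rightarrow> complex" where
  "branch u i = (if i = 1 then 0 else u i)"

definition hyp_poly :: "nat \<Rightarrow> (nat \<Rightarrow> complex) \<Rightarrow> complex \<Rightarrow> complex" where
  "hyp_poly g u x = x * (\<Prod>i\<in>{2..2*g+1}. (x - u i))"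

text \<open>A closed cycle on the curve avoiding branch points and infinity: a closed
  piecewise-C1 path p in the u-plane avoiding the branch points, together with
  a continuous branch s of v along p that returns to its initial value.\<close>
definition lifted_cycle :: "nat \<Rightarrow> (nat \<Rightarrow> complex) \<Rightarrow> (real \<Rightarrow> complex) \<Rightarrow> (real \<Rightarrow> complex) \<Rightarrow> bool" where
  "lifted_cycle g u p s \<longleftrightarrow>
     valid_path p \<and> pathfinish p = pathstart p \<and>
     path_image p \<inter> branch u ` {1..2*g+1} = {} \<and>
     continuous_on {0..1} s \<and> s 1 = s 0 \<and>
     (\<forall>t\<in>{0..1}. (s t)\<^sup>2 = hyp_poly g u (p t))"

definition period :: "(real \<Rightarrow> complex) \<Rightarrow> (real \<Rightarrow> complex) \<Rightarrow> complex" where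
  "period p s = integral {0..1} (\<lambda>t. vector_derivative p (at t within {0..1}) / s t)"

definition period_pole :: "(real \<Rightarrow> complex) \<Rightarrow> (real \<Rightarrow> complex) \<Rightarrow> complex \<Rightarrow> complex" where
  "period_pole p s z = integral {0..1} (\<lambda>t. vector_derivative p (at t within {0..1}) / ((p t - z) * s t))"

definition acoef :: "nat \<Rightarrow> (nat \<Rightarrow> (nat \<Rightarrow> complex) \<Rightarrow> real \<Rightarrow> complex)
    \<Rightarrow> (nat \<Rightarrow> (nat \<Rightarrow> complex) \<Rightarrow> real \<Rightarrow> complex) \<Rightarrow> (nat \<Rightarrow> complex)
    \<Rightarrow> (nat \<Rightarrow> complex) \<Rightarrow> nat \<Rightarrow> complex" where
  "acoef g p s c u i =
     (if i = 1 then - (\<Sum>k\<in>{1..2*g}. c k * period (p k u) (s k u))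
      else (\<Sum>k\<in>{1..2*g}. c k * period (p k u) (s k u))
           + u i * (\<Sum>k\<in>{1..2*g}. c k * period_pole (p k u) (s k u) (u i)))"

definition alpha :: "nat \<Rightarrow> complex" where
  "alpha i = (if i = 1 then 1/4 else -1/4)"

definition alpha_inf :: "nat \<Rightarrow> complex" where
  "alpha_inf g = (2 * of_nat g - 1) / 4"

end

theory Submission
  imports Defs "HOL-Complex_Analysis.Cauchy_Integral_Theorem"
begin

lemma sqrt_agree:
  fixes f g :: "'a::topological_space \<Rightarrow> complex"
  assumes S: "connected S" and cf: "continuous_on S f" and cg: "continuous_on S g"
    and nz: "\<forall>x\<in>S. g x \<noteq> 0" and sq: "\<forall>x\<in>S. (f x)^2 = (g x)^2"
    and x0: "x0 \<in> S" "f x0 = g x0"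
  shows "\<forall>x\<in>S. f x = g x"
proof -
  let ?k = "\<lambda>x. f x / g x"
  have ck: "continuous_on S ?k" using cf cg nz by (intro continuous_intros) auto
  have rng: "?k ` S \<subseteq> {1, -1}"
  proof
    fix y assume "y \<in> ?k ` S"
    then obtain x where x: "x \<in> S" "y = f x / g x" by auto
    have "y^2 = 1" using x sq nz by (simp add: power_divide)
    then show "y \<in> {1,-1}" by (simp add: power2_eq_1_iff)
  qed
  have "?k constant_on S"
    by (rule continuous_finite_range_constant[OF S ck]) (rule finite_subset[OF rng], simp)
  then obtain c where c: "\<forall>x\<in>S. ?k x = c" by (auto simp: constant_on_def)
  have "c = 1" using c x0 nz by auto
  then show ?thesis using c nz by auto
qed

lemma glue:
  fixes \<phi> :: "real \<Rightarrow> complex"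
  assumes N: "N > 0" and pieces: "\<And>m. m < N \<Longrightarrow> (\<phi> has_integral v m) {real m / N .. real (Suc m) / N}"
  shows "(\<phi> has_integral (\<Sum>m<N. v m)) {0..1}"
proof -
  have "k \<le> N \<Longrightarrow> (\<phi> has_integral (\<Sum>m<k. v m)) {0 .. real k / N}" for k
  proof (induction k)
    case 0 then show ?case using has_integral_refl(1)[of \<phi> 0] by simp
  next
    case (Suc k)
    have "(\<phi> has_integral ((\<Sum>m<k. v m) + v k)) {0 .. real (Suc k) / N}"
      by (rule has_integral_combine[of _ "real k / N"]) (use Suc N pieces in \<open>auto simp: divide_right_mono\<close>)
    then show ?case by simp
  qed
  from this[of N] N show ?thesis by simp
qed

lemma piece:
  fixes \<eta> :: "real \<Rightarrow> complex"
  assumes vp: "valid_path \<eta>" and ab: "0 \<le> a" "a \<le> b" "b \<le> 1"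
    and D: "open D" "\<eta> ` {a..b} \<subseteq> D" and F: "\<forall>x\<in>D. (F has_field_derivative q x) (at x)"
    and \<psi>: "\<forall>t\<in>{a..b}. \<psi> t = q (\<eta> t)"
  shows "((\<lambda>t. vector_derivative \<eta> (at t within {0..1}) * \<psi> t) has_integral F (\<eta> b) - F (\<eta> a)) {a..b}"
proof -
  obtain S where S: "finite S" "\<eta> C1_differentiable_on {0..1} - S" and ce: "continuous_on {0..1} \<eta>"
    using vp by (auto simp: valid_path_def piecewise_C1_differentiable_on_def)
  have dif: "\<eta> differentiable at x" if "x \<in> {0..1} - S" for x
    using S(2) that by (auto simp: C1_differentiable_on_eq)
  have "((\<lambda>t. vector_derivative \<eta> (at t within {0..1}) * \<psi> t) has_integral (F \<circ> \<eta>) b - (F \<circ> \<eta>) a) {a..b}"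
  proof (rule fundamental_theorem_of_calculus_interior_strong[OF S(1) ab(2)])
    fix x assume "x \<in> {a<..<b} - S"
    then have x: "a < x" "x < b" "x \<notin> S" by auto
    then have x01: "x \<in> {0..1} - S" using ab by auto
    have vd: "(\<eta> has_vector_derivative vector_derivative \<eta> (at x)) (at x)"
      by (rule vector_derivative_works[THEN iffD1, OF dif[OF x01]])
    have ex: "\<eta> x \<in> D" using D(2) x by force
    have "((F \<circ> \<eta>) has_vector_derivative (vector_derivative \<eta> (at x) * q (\<eta> x))) (at x)"
      using field_vector_diff_chain_at[OF vd] F ex by blast
    moreover have "vector_derivative \<eta> (at x within {0..1}) = vector_derivative \<eta> (at x)"
      using vector_derivative_at_within_ivl[OF vd, of 0 1] x01 by auto
    moreover have "\<psi> x = q (\<eta> x)" using \<psi> x by auto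
    ultimately show "((F \<circ> \<eta>) has_vector_derivative vector_derivative \<eta> (at x within {0..1}) * \<psi> x) (at x)"
      by simp
  next
    have "continuous_on D F" using F
      by (meson DERIV_isCont continuous_at_imp_continuous_on)
    moreover have "continuous_on {a..b} \<eta>" using ab by (intro continuous_on_subset[OF ce]) auto
    ultimately show "continuous_on {a..b} (F \<circ> \<eta>)"
      unfolding o_def by (rule continuous_on_compose2[OF _ _ D(2)])
  qed
  then show ?thesis by simp
qed

lemma overlap_const:
  fixes G1 G2 :: "complex \<Rightarrow> complex"
  assumes S: "convex S" "open S"
    and G1: "\<forall>x\<in>S. (G1 has_field_derivative q1 x) (at x)"
    and G2: "\<forall>x\<in>S. (G2 has_field_derivative q2 x) (at x)"
    and q: "\<forall>x\<in>S. q1 x = q2 x" and xy: "x \<in> S" "y \<in> S"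
  shows "G1 x - G1 y = G2 x - G2 y"
proof -
  have "\<exists>c. \<forall>x\<in>S. G1 x - G2 x = c"
  proof (rule has_field_derivative_zero_constant[OF S(1)])
    fix x assume "x \<in> S"
    then have "((\<lambda>x. G1 x - G2 x) has_field_derivative q1 x - q2 x) (at x)"
      using G1 G2 by (intro derivative_intros) auto
    then show "((\<lambda>x. G1 x - G2 x) has_field_derivative 0) (at x within S)"
      using q \<open>x\<in>S\<close> by (auto intro: has_field_derivative_at_within)
  qed
  then obtain c where "\<forall>x\<in>S. G1 x - G2 x = c" by blast
  then have "G1 x - G2 x = G1 y - G2 y" using xy by auto
  then show ?thesis by (simp add: algebra_simps)
qed

lemma chord:
  fixes \<eta> \<tau> :: "real \<Rightarrow> complex" and c :: "nat \<Rightarrow> complex" and f :: "nat \<Rightarrow> complex \<Rightarrow> complex"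
    and h Q :: "complex \<Rightarrow> complex"
  assumes N: "N > 0" and r: "r > 0" and vp: "valid_path \<eta>"
    and cl: "\<eta> 1 = \<eta> 0" "\<tau> 1 = \<tau> 0" "c N = c 0" "f N = f 0"
    and fh: "\<And>m. m \<le> N \<Longrightarrow> f m holomorphic_on ball (c m) r"
    and fnz: "\<And>m x. m \<le> N \<Longrightarrow> x \<in> ball (c m) r \<Longrightarrow> f m x \<noteq> 0"
    and fsq: "\<And>m x. m \<le> N \<Longrightarrow> x \<in> ball (c m) r \<Longrightarrow> (f m x)^2 = Q x"
    and hh: "\<And>m. m \<le> N \<Longrightarrow> h holomorphic_on ball (c m) r"
    and cc: "\<And>m. m < N \<Longrightarrow> c (Suc m) \<in> ball (c m) r"
    and ins: "\<And>m t. m < N \<Longrightarrow> t \<in> {real m / N .. real (Suc m) / N} \<Longrightarrow> \<eta> t \<in> ball (c m) r \<and> \<tau> t = f m (\<eta> t)"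
  shows "((\<lambda>t. vector_derivative \<eta> (at t within {0..1}) * (h (\<eta> t) / \<tau> t)) has_integral
          (\<Sum>m<N. contour_integral (linepath (c m) (c (Suc m))) (\<lambda>x. h x / f m x))) {0..1}"
proof -
  define G where "G m = (SOME G. \<forall>x\<in>ball (c m) r. (G has_field_derivative h x / f m x) (at x))" for m
  have G: "\<forall>x\<in>ball (c m) r. (G m has_field_derivative h x / f m x) (at x)" if "m \<le> N" for m
  proof -
    have hol: "(\<lambda>x. h x / f m x) holomorphic_on ball (c m) r"
      using fh[OF that] hh[OF that] fnz[OF that] by (intro holomorphic_intros) auto
    obtain G0 where G0: "\<And>x. x \<in> ball (c m) r \<Longrightarrow> (G0 has_field_derivative h x / f m x) (at x within ball (c m) r)"
      using holomorphic_convex_primitive'[OF convex_ball open_ball hol] by blast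
    have "\<forall>x\<in>ball (c m) r. (G0 has_field_derivative h x / f m x) (at x)"
    proof
      fix x assume x: "x \<in> ball (c m) r"
      have "at x within ball (c m) r = at x" by (rule at_within_open[OF x open_ball])
      then show "(G0 has_field_derivative h x / f m x) (at x)" using G0[OF x] by simp
    qed
    then show ?thesis unfolding G_def
      by (rule someI[where P="\<lambda>G. \<forall>x\<in>ball (c m) r. (G has_field_derivative h x / f m x) (at x)"])
  qed
  have GN: "G N = G 0" unfolding G_def using cl by simp
  define T where "T m = \<eta> (real m / N)" for m
  have Tm: "T m \<in> ball (c m) r \<and> \<tau> (real m / N) = f m (T m)" if "m \<le> N" for m
  proof (cases "m < N")
    case True
    have "real m / N \<in> {real m / N .. real (Suc m) / N}" using N by (auto simp: divide_right_mono)
    then show ?thesis using ins[OF True] unfolding T_def by blast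
  next
    case False then have "m = N" using that by simp
    moreover have "0 \<in> {real 0 / N .. real (Suc 0) / N}" using N by auto
    then have "T 0 \<in> ball (c 0) r \<and> \<tau> 0 = f 0 (T 0)" using ins[OF N] unfolding T_def by fastforce
    ultimately show ?thesis using cl N unfolding T_def by simp
  qed
  have intv: "real m / N \<le> real (Suc m) / N" "0 \<le> real m / N" for m
    using N by (auto simp: divide_right_mono)
  have intv2: "real (Suc m) / N \<le> 1" if "m < N" for m
    using N that by (auto simp: divide_le_eq_1)
  have pc: "((\<lambda>t. vector_derivative \<eta> (at t within {0..1}) * (h (\<eta> t) / \<tau> t)) has_integral
              G m (T (Suc m)) - G m (T m)) {real m / N .. real (Suc m) / N}" if m: "m < N" for m
    unfolding T_def
  proof (rule piece[OF vp intv(2) intv(1) intv2[OF m] open_ball])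
    show "\<eta> ` {real m / N .. real (Suc m) / N} \<subseteq> ball (c m) r" using ins[OF m] by blast
    show "\<forall>x\<in>ball (c m) r. (G m has_field_derivative h x / f m x) (at x)" using G m by simp
    show "\<forall>t\<in>{real m / N .. real (Suc m) / N}. h (\<eta> t) / \<tau> t = h (\<eta> t) / f m (\<eta> t)"
      using ins[OF m] by simp
  qed
  have ch: "contour_integral (linepath (c m) (c (Suc m))) (\<lambda>x. h x / f m x) = G m (c (Suc m)) - G m (c m)"
    if m: "m < N" for m
  proof -
    have "((\<lambda>x. h x / f m x) has_contour_integral G m (c (Suc m)) - G m (c m)) (linepath (c m) (c (Suc m)))"
    proof -
      have "((\<lambda>x. h x / f m x) has_contour_integral
             G m (pathfinish (linepath (c m) (c (Suc m)))) - G m (pathstart (linepath (c m) (c (Suc m)))))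
             (linepath (c m) (c (Suc m)))"
      proof (rule contour_integral_primitive[of "ball (c m) r"])
        show "\<And>x. x \<in> ball (c m) r \<Longrightarrow> (G m has_field_derivative h x / f m x) (at x within ball (c m) r)"
          using G m by (auto intro: has_field_derivative_at_within)
        show "path_image (linepath (c m) (c (Suc m))) \<subseteq> ball (c m) r"
          unfolding path_image_linepath using cc[OF m] r by (intro closed_segment_subset) auto
      qed simp
      then show ?thesis by simp
    qed
    then show ?thesis by (rule contour_integral_unique)
  qed
  define E where "E m = G m (T m) - G m (c m)" for m
  have key: "G m (T (Suc m)) - G m (c (Suc m)) = E (Suc m)" if m: "m < N" for m
  proof -
    define S where "S = ball (c m) r \<inter> ball (c (Suc m)) r"
    have Sco: "convex S" "open S" unfolding S_def by (auto intro: convex_Int)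
    have T1: "T (Suc m) \<in> ball (c m) r \<and> \<tau> (real (Suc m) / N) = f m (T (Suc m))"
      using ins[OF m, of "real (Suc m) / N"] intv(1)[of m] unfolding T_def by auto
    have T2: "T (Suc m) \<in> ball (c (Suc m)) r \<and> \<tau> (real (Suc m) / N) = f (Suc m) (T (Suc m))"
      using Tm[of "Suc m"] m by simp
    have TS: "T (Suc m) \<in> S" using T1 T2 unfolding S_def by auto
    have cS: "c (Suc m) \<in> S" using cc[OF m] r unfolding S_def by auto
    have eqf: "\<forall>x\<in>S. f m x = f (Suc m) x"
    proof (rule sqrt_agree[OF convex_connected[OF Sco(1)]])
      show "continuous_on S (f m)" using fh[of m] m unfolding S_def
        by (meson holomorphic_on_imp_continuous_on continuous_on_subset inf_le1 less_imp_le_nat)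
      show "continuous_on S (f (Suc m))" using fh[of "Suc m"] m unfolding S_def
        by (meson holomorphic_on_imp_continuous_on continuous_on_subset inf_le2 Suc_leI)
      show "\<forall>x\<in>S. f (Suc m) x \<noteq> 0" using fnz[of "Suc m"] m unfolding S_def by auto
      show "\<forall>x\<in>S. (f m x)^2 = (f (Suc m) x)^2" using fsq[of m] fsq[of "Suc m"] m unfolding S_def by auto
      show "f m (T (Suc m)) = f (Suc m) (T (Suc m))" using T1 T2 by simp
    qed (rule TS)
    have "G m (T (Suc m)) - G m (c (Suc m)) = G (Suc m) (T (Suc m)) - G (Suc m) (c (Suc m))"
    proof (rule overlap_const[OF Sco])
      show "\<forall>x\<in>S. (G m has_field_derivative h x / f m x) (at x)" using G[of m] m unfolding S_def by auto
      show "\<forall>x\<in>S. (G (Suc m) has_field_derivative h x / f (Suc m) x) (at x)"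
        using G[of "Suc m"] m unfolding S_def by auto
      show "\<forall>x\<in>S. h x / f m x = h x / f (Suc m) x" using eqf by simp
    qed (use TS cS in auto)
    then show ?thesis unfolding E_def by simp
  qed
  have split: "G m (T (Suc m)) - G m (T m) =
      contour_integral (linepath (c m) (c (Suc m))) (\<lambda>x. h x / f m x) + (E (Suc m) - E m)" if m: "m < N" for m
    using ch[OF m] key[OF m] unfolding E_def by (simp add: algebra_simps)
  have "(\<Sum>m<N. G m (T (Suc m)) - G m (T m)) =
      (\<Sum>m<N. contour_integral (linepath (c m) (c (Suc m))) (\<lambda>x. h x / f m x)) + (\<Sum>m<N. E (Suc m) - E m)"
    using split by (simp add: sum.distrib)
  also have "(\<Sum>m<N. E (Suc m) - E m) = E N - E 0" by (rule sum_lessThan_telescope)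
  also have "E N = E 0" unfolding E_def T_def using GN cl N by simp
  finally have sumeq: "(\<Sum>m<N. G m (T (Suc m)) - G m (T m)) =
      (\<Sum>m<N. contour_integral (linepath (c m) (c (Suc m))) (\<lambda>x. h x / f m x))" by simp
  show ?thesis using glue[OF N pc] sumeq by simp
qed

definition bsq :: "(nat \<Rightarrow> complex) \<Rightarrow> nat set \<Rightarrow> complex \<Rightarrow> complex \<Rightarrow> complex \<Rightarrow> complex" where
  "bsq b I c a x = a * (\<Prod>i\<in>I. csqrt ((x - b i) / (c - b i)))"

lemma ratio_good:
  fixes x c b :: complex
  assumes "norm (x - c) < norm (c - b)"
  shows "(x - b) / (c - b) \<notin> \<real>\<^sub>\<le>\<^sub>0"
proof -
  have cb: "c \<noteq> b" using assms by auto
  have eq: "(x - b) / (c - b) = 1 + (x - c) / (c - b)" using cb by (simp add: field_simps)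
  have n: "norm ((x - c) / (c - b)) < 1" using assms cb by (simp add: norm_divide divide_less_eq)
  have "\<bar>Re ((x - c) / (c - b))\<bar> < 1" using abs_Re_le_cmod[of "(x - c) / (c - b)"] n by linarith
  then have "Re ((x - b) / (c - b)) > 0" unfolding eq by simp
  then show ?thesis by (auto simp: complex_nonpos_Reals_iff)
qed

lemma ratio_good_ball:
  fixes x c b :: complex
  assumes "x \<in> ball c r" "r \<le> norm (c - b)"
  shows "(x - b) / (c - b) \<notin> \<real>\<^sub>\<le>\<^sub>0" "(x - b) / (c - b) \<noteq> 0" "x \<noteq> b" "c \<noteq> b"
proof -
  have "norm (x - c) < norm (c - b)" using assms by (simp add: dist_norm norm_minus_commute)
  then show g: "(x - b) / (c - b) \<notin> \<real>\<^sub>\<le>\<^sub>0" by (rule ratio_good)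
  then show "(x - b) / (c - b) \<noteq> 0" by auto
  then show "x \<noteq> b" by auto
  have "0 \<le> dist c x" "dist c x < r" using assms(1) by auto
  then have "r > 0" by linarith
  then show "c \<noteq> b" using assms(2) by auto
qed

lemma bsq_holo:
  assumes "finite I" "\<forall>i\<in>I. r \<le> norm (c - b i)"
  shows "bsq b I c a holomorphic_on ball c r"
proof -
  have hi: "(\<lambda>x. csqrt ((x - b i) / (c - b i))) holomorphic_on ball c r" if i: "i \<in> I" for i
  proof -
    have "(\<lambda>x. csqrt ((x - b i) / (c - b i))) field_differentiable at x" if x: "x \<in> ball c r" for x
    proof -
      have ng: "(x - b i) / (c - b i) \<notin> \<real>\<^sub>\<le>\<^sub>0" and cb: "c \<noteq> b i"
        using ratio_good_ball[OF x] assms i by auto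
      have "((\<lambda>x. csqrt ((x - b i) / (c - b i))) has_field_derivative
              (1 / (c - b i)) / (2 * csqrt ((x - b i) / (c - b i)))) (at x)"
        by (rule has_field_derivative_csqrt'[where f="\<lambda>x. (x - b i) / (c - b i)", OF _ ng]) (use cb in \<open>auto intro!: derivative_eq_intros\<close>)
      then show ?thesis unfolding field_differentiable_def by blast
    qed
    then show ?thesis by (simp add: holomorphic_on_def field_differentiable_at_within)
  qed
  have "(\<lambda>x. \<Prod>i\<in>I. csqrt ((x - b i) / (c - b i))) holomorphic_on ball c r"
    by (rule holomorphic_on_prod) (use hi in blast)
  then show ?thesis unfolding bsq_def [abs_def] by (rule holomorphic_on_mult[OF holomorphic_on_const])
qed

lemma bsq_nz:
  assumes "finite I" "\<forall>i\<in>I. r \<le> norm (c - b i)" "a \<noteq> 0" "x \<in> ball c r"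
  shows "bsq b I c a x \<noteq> 0"
  using assms ratio_good_ball[OF assms(4)] unfolding bsq_def by auto

lemma bsq_sq:
  assumes "finite I" "\<forall>i\<in>I. r \<le> norm (c - b i)" "x \<in> ball c r" "a^2 = (\<Prod>i\<in>I. c - b i)"
  shows "(bsq b I c a x)^2 = (\<Prod>i\<in>I. x - b i)"
proof -
  have "(bsq b I c a x)^2 = a^2 * (\<Prod>i\<in>I. (csqrt ((x - b i) / (c - b i)))^2)"
    unfolding bsq_def by (simp add: power_mult_distrib prod_power_distrib)
  also have "\<dots> = a^2 * (\<Prod>i\<in>I. (x - b i) / (c - b i))" by simp
  also have "\<dots> = (\<Prod>i\<in>I. x - b i)"
  proof -
    have "\<forall>i\<in>I. c - b i \<noteq> 0" using ratio_good_ball(4)[OF assms(3)] assms(2) by auto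
    then have "(\<Prod>i\<in>I. c - b i) \<noteq> 0" using assms(1) by simp
    then show ?thesis using assms(4) by (simp add: prod_dividef)
  qed
  finally show ?thesis .
qed

lemma bsq_center:
  assumes "\<forall>i\<in>I. r \<le> norm (c - b i)" "r > 0"
  shows "bsq b I c a c = a"
proof -
  have "\<forall>i\<in>I. c - b i \<noteq> 0" using assms by auto
  then show ?thesis unfolding bsq_def by simp
qed

lemma bsq_deriv:
  assumes "finite I" "\<forall>i\<in>I. r \<le> norm (c - b i)" "x \<in> ball c r"
  shows "(bsq b I c a has_field_derivative bsq b I c a x * (\<Sum>i\<in>I. 1 / (2 * (x - b i)))) (at x)"
proof -
  define q where "q i = csqrt ((x - b i) / (c - b i))" for i
  have ng: "(x - b i) / (c - b i) \<notin> \<real>\<^sub>\<le>\<^sub>0" "x \<noteq> b i" "c \<noteq> b i" if "i \<in> I" for i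
    using ratio_good_ball[OF assms(3)] assms(2) that by auto
  have d: "((\<lambda>x. csqrt ((x - b i) / (c - b i))) has_field_derivative
              (1 / (c - b i)) / (2 * q i)) (at x)" if i: "i \<in> I" for i
    unfolding q_def by (rule has_field_derivative_csqrt'[where f="\<lambda>x. (x - b i) / (c - b i)", OF _ ng(1)[OF i]]) (use ng(3)[OF i] in \<open>auto intro!: derivative_eq_intros\<close>)
  have nz: "q i \<noteq> 0" if "i \<in> I" for i using ng[OF that] unfolding q_def by auto
  have P: "((\<lambda>x. \<Prod>i\<in>I. csqrt ((x - b i) / (c - b i))) has_field_derivative
       (\<Prod>i\<in>I. q i) * (\<Sum>i\<in>I. (1 / (c - b i)) / (2 * q i) / q i)) (at x)"
    using has_field_derivative_prod'[of I "\<lambda>i x. csqrt ((x - b i) / (c - b i))" x "\<lambda>i. (1 / (c - b i)) / (2 * q i)"]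
      d nz unfolding q_def by auto
  have eq: "(1 / (c - b i)) / (2 * q i) / q i = 1 / (2 * (x - b i))" if i: "i \<in> I" for i
  proof -
    have qq: "q i * q i = (x - b i) / (c - b i)" unfolding q_def by (metis power2_csqrt power2_eq_square)
    have "(1 / (c - b i)) / (2 * q i) / q i = 1 / (2 * ((c - b i) * (q i * q i)))"
      using ng[OF i] nz[OF i] by (simp add: field_simps)
    also have "(c - b i) * (q i * q i) = x - b i" using qq ng[OF i] by (simp add: field_simps)
    finally show ?thesis .
  qed
  have "(bsq b I c a has_field_derivative a * ((\<Prod>i\<in>I. q i) * (\<Sum>i\<in>I. (1 / (c - b i)) / (2 * q i) / q i))) (at x)"
    unfolding bsq_def[abs_def] by (rule DERIV_cmult[OF P])
  then show ?thesis using eq unfolding bsq_def q_def by (simp add: mult.assoc)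
qed

definition Per :: "(complex \<Rightarrow> complex) \<Rightarrow> (real \<Rightarrow> complex) \<Rightarrow> (real \<Rightarrow> complex) \<Rightarrow> complex" where
  "Per h q w = integral {0..1} (\<lambda>t. vector_derivative q (at t within {0..1}) * (h (q t) / w t))"

lemma branch_upd: "j \<noteq> 1 \<Longrightarrow> branch (u(j := z)) i = (if i = j then z else branch u i)"
  by (auto simp: branch_def)

lemma hyp_prod: "hyp_poly g u x = (\<Prod>i\<in>{1..2*g+1}. x - branch u i)"
proof -
  have "{1..2*g+1} = insert 1 {2..2*g+1}" by auto
  then have "(\<Prod>i\<in>{1..2*g+1}. x - branch u i) = (x - branch u 1) * (\<Prod>i\<in>{2..2*g+1}. x - branch u i)"
    by simp
  also have "(\<Prod>i\<in>{2..2*g+1}. x - branch u i) = (\<Prod>i\<in>{2..2*g+1}. x - u i)"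
    by (rule prod.cong) (auto simp: branch_def)
  finally show ?thesis by (simp add: hyp_poly_def branch_def)
qed

lemma prod_upd:
  assumes "j \<in> {1..2*g+1}" "j \<noteq> 1"
  shows "(\<Prod>i\<in>{1..2*g+1}. x - branch u i) = (x - u j) * (\<Prod>i\<in>{1..2*g+1}-{j}. x - branch u i)"
    and "(\<Prod>i\<in>{1..2*g+1}. x - branch (u(j:=z)) i) = (x - z) * (\<Prod>i\<in>{1..2*g+1}-{j}. x - branch u i)"
proof -
  show "(\<Prod>i\<in>{1..2*g+1}. x - branch u i) = (x - u j) * (\<Prod>i\<in>{1..2*g+1}-{j}. x - branch u i)"
    using prod.remove[of "{1..2*g+1}" j "\<lambda>i. x - branch u i"] assms by (simp add: branch_def)
  have "(\<Prod>i\<in>{1..2*g+1}. x - branch (u(j:=z)) i) = (x - z) * (\<Prod>i\<in>{1..2*g+1}-{j}. x - branch (u(j:=z)) i)"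
    using prod.remove[of "{1..2*g+1}" j "\<lambda>i. x - branch (u(j:=z)) i"] assms by (simp add: branch_def)
  also have "(\<Prod>i\<in>{1..2*g+1}-{j}. x - branch (u(j:=z)) i) = (\<Prod>i\<in>{1..2*g+1}-{j}. x - branch u i)"
    by (rule prod.cong) (auto simp: branch_def)
  finally show "(\<Prod>i\<in>{1..2*g+1}. x - branch (u(j:=z)) i) = (x - z) * (\<Prod>i\<in>{1..2*g+1}-{j}. x - branch u i)" .
qed

locale hsetup =
  fixes g :: nat and U :: "(nat \<Rightarrow> complex) set" and p s :: "nat \<Rightarrow> (nat \<Rightarrow> complex) \<Rightarrow> real \<Rightarrow> complex"
  assumes U_open: "open U"
    and cycles: "\<And>u k. u \<in> U \<Longrightarrow> k \<in> {1..2*g} \<Longrightarrow> lifted_cycle g u (p k u) (s k u)"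
    and cont_p: "\<And>k. k \<in> {1..2*g} \<Longrightarrow> continuous_on (U \<times> {0..1}) (\<lambda>x. p k (fst x) (snd x))"
    and cont_s: "\<And>k. k \<in> {1..2*g} \<Longrightarrow> continuous_on (U \<times> {0..1}) (\<lambda>x. s k (fst x) (snd x))"
begin

lemma loop:
  assumes u: "u \<in> U" and k: "k \<in> {1..2*g}"
  shows "valid_path (p k u)" "p k u 1 = p k u 0" "continuous_on {0..1} (s k u)" "s k u 1 = s k u 0"
    "\<And>t. t \<in> {0..1} \<Longrightarrow> (s k u t)^2 = (\<Prod>i\<in>{1..2*g+1}. p k u t - branch u i)"
    "\<And>t i. t \<in> {0..1} \<Longrightarrow> i \<in> {1..2*g+1} \<Longrightarrow> p k u t \<noteq> branch u i"
    "\<And>t. t \<in> {0..1} \<Longrightarrow> s k u t \<noteq> 0"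
    "continuous_on {0..1} (p k u)"
proof -
  have L: "lifted_cycle g u (p k u) (s k u)" by (rule cycles[OF u k])
  then show vp: "valid_path (p k u)" "p k u 1 = p k u 0" "continuous_on {0..1} (s k u)" "s k u 1 = s k u 0"
    by (auto simp: lifted_cycle_def pathfinish_def pathstart_def)
  show sq: "\<And>t. t \<in> {0..1} \<Longrightarrow> (s k u t)^2 = (\<Prod>i\<in>{1..2*g+1}. p k u t - branch u i)"
    using L by (auto simp: lifted_cycle_def hyp_prod)
  show av: "\<And>t i. t \<in> {0..1} \<Longrightarrow> i \<in> {1..2*g+1} \<Longrightarrow> p k u t \<noteq> branch u i"
    using L unfolding lifted_cycle_def path_image_def by blast
  show "\<And>t. t \<in> {0..1} \<Longrightarrow> s k u t \<noteq> 0"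
  proof
    fix t assume t: "t \<in> {0..1}" and "s k u t = 0"
    then have "(\<Prod>i\<in>{1..2*g+1}. p k u t - branch u i) = 0" using sq[OF t] by simp
    then show False using av[OF t] by auto
  qed
  show "continuous_on {0..1} (p k u)" using vp(1) valid_path_imp_path path_def by blast
qed

end

context hsetup begin

lemma delta0:
  assumes u: "u \<in> U" and k: "k \<in> {1..2*g}"
  obtains d where "d > 0" "\<And>t i. t \<in> {0..1} \<Longrightarrow> i \<in> {1..2*g+1} \<Longrightarrow> d \<le> norm (p k u t - branch u i)"
proof -
  note L = loop[OF u k]
  define K where "K = path_image (p k u)"
  have K: "closed K" "K \<noteq> {}" unfolding K_def
    using L(1) by (auto intro: compact_imp_closed compact_path_image valid_path_imp_path)
  have nK: "branch u i \<notin> K" if "i \<in> {1..2*g+1}" for i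
    using L(6)[OF _ that] unfolding K_def path_image_def by force
  define d where "d = Min ((\<lambda>i. infdist (branch u i) K) ` {1..2*g+1})"
  have "d > 0" unfolding d_def using infdist_pos_not_in_closed[OF K] nK by (auto simp: Min_gr_iff)
  moreover have "d \<le> norm (p k u t - branch u i)" if t: "t \<in> {0..1}" and i: "i \<in> {1..2*g+1}" for t i
  proof -
    have "d \<le> infdist (branch u i) K" unfolding d_def using i by (intro Min_le) auto
    also have "\<dots> \<le> dist (branch u i) (p k u t)" using t unfolding K_def path_image_def by (intro infdist_le) auto
    finally show ?thesis by (simp add: dist_norm norm_minus_commute)
  qed
  ultimately show ?thesis using that by blast
qed

lemma cont_upd: "continuous_on S (\<lambda>q. u(j := f q))" if "continuous_on S f"
proof (rule continuous_on_coordinatewise_then_product)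
  fix i show "continuous_on S (\<lambda>q. (u(j := f q)) i)"
    by (cases "i = j") (use that in auto)
qed

lemma near_U:
  assumes u: "u \<in> U"
  obtains \<rho> where "\<rho> > 0" "\<And>z. z \<in> cball (u j) \<rho> \<Longrightarrow> u(j := z) \<in> U"
proof -
  have "open ((\<lambda>z. u(j:=z)) -` U)"
    by (rule continuous_imp_open_vimage[OF cont_upd[OF continuous_on_id] open_UNIV U_open]) auto
  moreover have "u j \<in> (\<lambda>z. u(j:=z)) -` U" using u by simp
  ultimately obtain \<rho> where "\<rho> > 0" "cball (u j) \<rho> \<subseteq> (\<lambda>z. u(j:=z)) -` U"
    by (meson open_contains_cball)
  then show ?thesis using that by (metis subsetD vimageE)
qed

lemma cont_param:
  assumes k: "k \<in> {1..2*g}" and \<rho>: "\<And>z. z \<in> cball (u j) \<rho> \<Longrightarrow> u(j := z) \<in> U"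
  shows "continuous_on (cball (u j) \<rho> \<times> {0..1}) (\<lambda>q. p k (u(j := fst q)) (snd q))"
    "continuous_on (cball (u j) \<rho> \<times> {0..1}) (\<lambda>q. s k (u(j := fst q)) (snd q))"
proof -
  have cm: "continuous_on (cball (u j) \<rho> \<times> {0..1}) (\<lambda>q. (u(j := fst q), snd q))"
    by (intro continuous_intros cont_upd)
  have im: "(\<lambda>q. (u(j := fst q), snd q)) ` (cball (u j) \<rho> \<times> {0..1}) \<subseteq> U \<times> {0..1}"
    using \<rho> by auto
  show "continuous_on (cball (u j) \<rho> \<times> {0..1}) (\<lambda>q. p k (u(j := fst q)) (snd q))"
    using continuous_on_compose2[OF cont_p[OF k] cm im] by simp
  show "continuous_on (cball (u j) \<rho> \<times> {0..1}) (\<lambda>q. s k (u(j := fst q)) (snd q))"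
    using continuous_on_compose2[OF cont_s[OF k] cm im] by simp
qed

end

lemma csqrt_ratio_holo:
  assumes "\<And>x. x \<in> S \<Longrightarrow> (x - z) / (x - u0) \<notin> \<real>\<^sub>\<le>\<^sub>0 \<and> x \<noteq> u0"
  shows "(\<lambda>x. csqrt ((x - z) / (x - u0))) holomorphic_on S"
proof -
  have "(\<lambda>x. csqrt ((x - z) / (x - u0))) field_differentiable at x" if x: "x \<in> S" for x
  proof -
    have ng: "(x - z) / (x - u0) \<notin> \<real>\<^sub>\<le>\<^sub>0" and nu: "x \<noteq> u0" using assms[OF x] by auto
    have "((\<lambda>x. csqrt ((x - z) / (x - u0))) has_field_derivative
            ((1 * (x - u0) - (x - z) * 1) / (x - u0)^2) / (2 * csqrt ((x - z) / (x - u0)))) (at x)"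
      by (rule has_field_derivative_csqrt'[where f="\<lambda>x. (x - z) / (x - u0)", OF _ ng])
         (use nu in \<open>auto intro!: derivative_eq_intros simp: power2_eq_square\<close>)
    then show ?thesis unfolding field_differentiable_def by blast
  qed
  then show ?thesis by (simp add: holomorphic_on_def field_differentiable_at_within)
qed

lemma sq_eq_sum_ne: "(a::complex)^2 = b^2 \<Longrightarrow> a + b \<noteq> 0 \<Longrightarrow> a = b"
proof -
  assume "a^2 = b^2" "a + b \<noteq> 0"
  then have "(a - b) * (a + b) = 0" by (simp add: algebra_simps power2_eq_square)
  then show "a = b" using \<open>a + b \<noteq> 0\<close> by simp
qed

context hsetup begin

lemma construct:
  assumes u: "u \<in> U" and j: "j \<in> {2..2*g+1}" and k: "k \<in> {1..2*g}"
  obtains N r where "N > 0" "r > 0"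
    "\<And>m i. m \<le> N \<Longrightarrow> i \<in> {1..2*g+1} \<Longrightarrow> 2*r \<le> norm (p k u (real m/N) - branch u i)"
    "\<And>m. m < N \<Longrightarrow> p k u (real (Suc m)/N) \<in> ball (p k u (real m/N)) r"
    "\<And>m t'. m < N \<Longrightarrow> t' \<in> {real m/N .. real (Suc m)/N} \<Longrightarrow>
       p k u t' \<in> ball (p k u (real m/N)) r \<and>
       s k u t' = bsq (branch u) {1..2*g+1} (p k u (real m/N)) (s k u (real m/N)) (p k u t')"
    "eventually (\<lambda>z. \<forall>h. h holomorphic_on -(branch (u(j:=z)) ` {1..2*g+1}) \<longrightarrow>
        ((\<lambda>t. vector_derivative (p k (u(j:=z))) (at t within {0..1}) * (h (p k (u(j:=z)) t) / s k (u(j:=z)) t)) has_integral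
         (\<Sum>m<N. contour_integral (linepath (p k u (real m/N)) (p k u (real (Suc m)/N)))
            (\<lambda>x. h x / (bsq (branch u) {1..2*g+1} (p k u (real m/N)) (s k u (real m/N)) x * csqrt ((x - z)/(x - u j)))))) {0..1}) (nhds (u j))"
proof -
  define I where "I = {1..2*g+1}"
  have jI: "j \<in> I" "j \<noteq> 1" using j unfolding I_def by auto
  have finI: "finite I" unfolding I_def by simp
  note L = loop[OF u k]
  obtain \<delta>0 where \<delta>0: "\<delta>0 > 0" "\<And>t i. t \<in> {0..1} \<Longrightarrow> i \<in> I \<Longrightarrow> \<delta>0 \<le> norm (p k u t - branch u i)"
    using delta0[OF u k] unfolding I_def by blast
  define r where "r = \<delta>0 / 2"
  have r: "r > 0" using \<delta>0 by (simp add: r_def)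
  obtain \<rho> where \<rho>: "\<rho> > 0" "\<And>z. z \<in> cball (u j) \<rho> \<Longrightarrow> u(j := z) \<in> U" using near_U[OF u] by blast
  define Kc where "Kc = cball (u j) \<rho> \<times> {0..1::real}"
  define \<Phi> where "\<Phi> q = p k (u(j := fst q)) (snd q)" for q
  define \<Psi> where "\<Psi> q = s k (u(j := fst q)) (snd q)" for q
  have c\<Phi>: "continuous_on Kc \<Phi>" and c\<Psi>: "continuous_on Kc \<Psi>"
    using cont_param[OF k \<rho>(2)] unfolding Kc_def \<Phi>_def \<Psi>_def by auto
  have "uniformly_continuous_on Kc \<Phi>"
    using compact_uniformly_continuous[OF c\<Phi>] unfolding Kc_def by (simp add: compact_Times)
  moreover have "r / 2 > 0" using r by simp
  ultimately obtain \<epsilon>1 where \<epsilon>1: "\<epsilon>1 > 0" "\<And>q q'. q \<in> Kc \<Longrightarrow> q' \<in> Kc \<Longrightarrow> dist q' q < \<epsilon>1 \<Longrightarrow> dist (\<Phi> q') (\<Phi> q) < r/2"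
    unfolding uniformly_continuous_on_def by metis
  obtain N :: nat where N: "1/\<epsilon>1 < real N" using reals_Archimedean2 by blast
  have N0: "N > 0" using N \<epsilon>1 by (cases N) (auto simp: field_simps)
  have invN: "1 / real N < \<epsilon>1" using N \<epsilon>1 N0 by (simp add: field_simps)
  have \<Phi>u: "\<Phi> (u j, t) = p k u t" for t unfolding \<Phi>_def by simp
  have ujK: "(u j, t) \<in> Kc" if "t \<in> {0..1}" for t using \<rho> that unfolding Kc_def by auto
  have F1: "dist (p k u t') (p k u t) < r/2" if "t \<in> {0..1}" "t' \<in> {0..1}" "\<bar>t' - t\<bar> \<le> 1/N" for t t'
  proof -
    have "dist (u j, t') (u j, t) < \<epsilon>1" using that invN by (simp add: dist_Pair_Pair dist_real_def)
    then show ?thesis using \<epsilon>1(2)[OF ujK[OF that(1)] ujK[OF that(2)]] by (simp add: \<Phi>u)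
  qed
  have F2: "dist (p k (u(j:=z)) t) (p k u t) < r/2" if "dist z (u j) < min \<rho> \<epsilon>1" "t \<in> {0..1}" for z t
  proof -
    have zK: "(z, t) \<in> Kc" using that unfolding Kc_def by (auto simp: dist_commute)
    have "dist (z, t) (u j, t) < \<epsilon>1" using that by (simp add: dist_Pair_Pair)
    then show ?thesis using \<epsilon>1(2)[OF ujK[OF that(2)] zK] by (simp add: \<Phi>_def)
  qed
  define t where "t m = real m / real N" for m
  have t01: "t m \<in> {0..1}" if "m \<le> N" for m using that N0 unfolding t_def by (auto simp: field_simps)
  have tstep: "t (Suc m) - t m = 1 / N" for m unfolding t_def by (simp add: add_divide_distrib)
  define c where "c m = p k u (t m)" for m
  define F where "F m = bsq (branch u) I (c m) (s k u (t m))" for m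
  have hb: "2*r \<le> norm (c m - branch u i)" if "m \<le> N" "i \<in> I" for m i
    using \<delta>0(2)[OF t01[OF that(1)] that(2)] unfolding r_def c_def by simp
  have hb1: "\<forall>i\<in>I. r \<le> norm (c m - branch u i)" if "m \<le> N" for m
    using hb[OF that] r by force
  have cc: "c (Suc m) \<in> ball (c m) r" if "m < N" for m
  proof -
    have "dist (c (Suc m)) (c m) < r/2"
      unfolding c_def by (rule F1[OF t01 t01]) (use that tstep in auto)
    then show ?thesis using r by (simp add: dist_commute)
  qed
  have Fh: "F m holomorphic_on ball (c m) r" if "m \<le> N" for m
    unfolding F_def by (rule bsq_holo[OF finI hb1[OF that]])
  have snz: "s k u (t m) \<noteq> 0" if "m \<le> N" for m using L(7)[OF t01[OF that]] .
  have Fnz: "F m x \<noteq> 0" if "m \<le> N" "x \<in> ball (c m) r" for m x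
    unfolding F_def by (rule bsq_nz[OF finI hb1[OF that(1)] snz[OF that(1)] that(2)])
  have Fsq: "(F m x)^2 = (\<Prod>i\<in>I. x - branch u i)" if "m \<le> N" "x \<in> ball (c m) r" for m x
    unfolding F_def by (rule bsq_sq[OF finI hb1[OF that(1)] that(2)]) (use L(5)[OF t01[OF that(1)]] in \<open>simp add: c_def I_def\<close>)
  have Fc: "F m (c m) = s k u (t m)" if "m \<le> N" for m
    unfolding F_def by (rule bsq_center[OF hb1[OF that] r])
  have far: "r < norm (x - branch u i)" if "m \<le> N" "x \<in> ball (c m) r" "i \<in> I" for m x i
  proof -
    have "norm (c m - branch u i) \<le> norm (c m - x) + norm (x - branch u i)" using norm_triangle_ineq[of "c m - x" "x - branch u i"] by simp
    moreover have "norm (c m - x) < r" using that(2) by (simp add: dist_norm)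
    ultimately show ?thesis using hb[OF that(1,3)] by linarith
  qed
  have uj_b: "branch u j = u j" using jI by (simp add: branch_def)
  have farj: "r < norm (x - u j)" if "m \<le> N" "x \<in> ball (c m) r" for m x using far[OF that jI(1)] uj_b by simp
  have rat: "(x - z)/(x - u j) \<notin> \<real>\<^sub>\<le>\<^sub>0 \<and> x \<noteq> u j" and xz: "x \<noteq> z"
    if "m \<le> N" "x \<in> ball (c m) r" "dist z (u j) < r/2" for m x z
  proof -
    have "norm (z - u j) < r/2" using that(3) by (simp add: dist_norm)
    then have "norm (z - u j) < norm (u j - x)" using farj[OF that(1,2)] r by (simp add: norm_minus_commute)
    then have "(z - x) / (u j - x) \<notin> \<real>\<^sub>\<le>\<^sub>0" by (rule ratio_good)
    moreover have "(z - x) / (u j - x) = (x - z)/(x - u j)" by (metis minus_diff_eq minus_divide_divide)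
    ultimately show "(x - z)/(x - u j) \<notin> \<real>\<^sub>\<le>\<^sub>0 \<and> x \<noteq> u j" using farj[OF that(1,2)] r by auto
    show "x \<noteq> z"
    proof
      assume "x = z"
      then have "norm (x - u j) < r/2" using that(3) by (simp add: dist_norm)
      then show False using farj[OF that(1,2)] r by simp
    qed
  qed
  define f where "f z m x = F m x * csqrt ((x - z)/(x - u j))" for z m x
  have fh: "f z m holomorphic_on ball (c m) r" if "m \<le> N" "dist z (u j) < r/2" for z m
    unfolding f_def[abs_def]
    by (intro holomorphic_on_mult Fh[OF that(1)] csqrt_ratio_holo rat[OF that(1) _ that(2)])
  have fnz: "f z m x \<noteq> 0" if "m \<le> N" "x \<in> ball (c m) r" "dist z (u j) < r/2" for z m x
    using Fnz[OF that(1,2)] rat[OF that] xz[OF that] unfolding f_def by auto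
  have fsq: "(f z m x)^2 = (\<Prod>i\<in>I. x - branch (u(j:=z)) i)" if "m \<le> N" "x \<in> ball (c m) r" "dist z (u j) < r/2" for z m x
  proof -
    have "(f z m x)^2 = (F m x)^2 * ((x - z)/(x - u j))" unfolding f_def by (simp add: power_mult_distrib)
    also have "\<dots> = (\<Prod>i\<in>I. x - branch u i) * ((x - z)/(x - u j))" using Fsq[OF that(1,2)] by simp
    also have "\<dots> = (\<Prod>i\<in>I. x - branch (u(j:=z)) i)"
      using prod_upd(1)[of j g x u] prod_upd(2)[of j g x u z] jI rat[OF that] unfolding I_def by simp
    finally show ?thesis .
  qed
  have E1: "eventually (\<lambda>z. dist z (u j) < min (min \<rho> \<epsilon>1) (r/2)) (nhds (u j))"
    unfolding eventually_nhds_metric using \<rho> \<epsilon>1 r by (intro exI[of _ "min (min \<rho> \<epsilon>1) (r/2)"]) auto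
  have E2: "eventually (\<lambda>z. s k (u(j:=z)) (t m) = f z m (p k (u(j:=z)) (t m))) (nhds (u j))" if m: "m < N" for m
  proof -
    define A where "A z = s k (u(j:=z)) (t m)" for z
    define X where "X z = p k (u(j:=z)) (t m)" for z
    have tm: "t m \<in> {0..1}" using t01 m by simp
    have int: "u j \<in> interior (cball (u j) \<rho>)" using \<rho> by simp
    have pr: "continuous_on (cball (u j) \<rho>) (\<lambda>z. (z, t m))" by (intro continuous_intros)
    have pri: "(\<lambda>z. (z, t m)) ` cball (u j) \<rho> \<subseteq> Kc" using tm unfolding Kc_def by auto
    have cA: "isCont A (u j)"
      using continuous_on_interior[OF continuous_on_compose2[OF c\<Psi> pr pri] int] unfolding A_def \<Psi>_def by simp
    have cX: "isCont X (u j)"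
      using continuous_on_interior[OF continuous_on_compose2[OF c\<Phi> pr pri] int] unfolding X_def \<Phi>_def by simp
    have Xu: "X (u j) = c m" unfolding X_def c_def by simp
    have Au: "A (u j) = s k u (t m)" unfolding A_def by simp
    have cmb: "c m \<in> ball (c m) r" using r by simp
    have cF: "isCont (F m) (c m)"
      using continuous_on_interior[OF holomorphic_on_imp_continuous_on[OF Fh] , of m "c m"] m cmb by simp
    have cmu: "c m \<noteq> u j" using farj[of m "c m"] m cmb by auto
    have cB: "isCont (\<lambda>z. f z m (X z)) (u j)"
      unfolding f_def
    proof (intro continuous_intros isCont_o2[OF cX, where g="F m"] isCont_csqrt')
      show "isCont (F m) (X (u j))" using cF Xu by simp
      show "isCont X (u j)" by (rule cX)
      show "X (u j) - u j \<noteq> 0" using Xu cmu by simp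
      show "(X (u j) - u j) / (X (u j) - u j) \<notin> \<real>\<^sub>\<le>\<^sub>0" using Xu cmu by simp
    qed (rule cX)+
    have Bu: "f (u j) m (X (u j)) = s k u (t m)" unfolding f_def using Xu cmu Fc m by simp
    have "((\<lambda>z. A z + f z m (X z)) \<longlongrightarrow> s k u (t m) + s k u (t m)) (at (u j))"
      using cA cB Au Bu unfolding isCont_def by (metis tendsto_add)
    moreover have "s k u (t m) + s k u (t m) \<noteq> 0" using snz m by simp
    ultimately have ev1: "eventually (\<lambda>z. A z + f z m (X z) \<noteq> 0) (at (u j))"
      by (rule tendsto_imp_eventually_ne)
    have ev2: "eventually (\<lambda>z. dist z (u j) < min (min \<rho> \<epsilon>1) (r/2)) (at (u j))"
      using E1 by (simp add: eventually_nhds_conv_at)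
    have "eventually (\<lambda>z. A z = f z m (X z)) (at (u j))"
      using ev1 ev2
    proof eventually_elim
      case (elim z)
      have wU: "u(j:=z) \<in> U" using elim(2) \<rho> by (auto simp: dist_commute)
      have "(A z)^2 = (\<Prod>i\<in>I. X z - branch (u(j:=z)) i)"
        using loop(5)[OF wU k tm] unfolding A_def X_def I_def by simp
      moreover have "X z \<in> ball (c m) r"
      proof -
        have "dist (X z) (c m) < r/2" using F2[of z "t m"] elim(2) tm unfolding X_def c_def by simp
        then show ?thesis using r by (simp add: dist_commute)
      qed
      then have "(f z m (X z))^2 = (\<Prod>i\<in>I. X z - branch (u(j:=z)) i)"
        using fsq[of m "X z" z] m elim(2) by simp
      ultimately show ?case using sq_eq_sum_ne elim(1) by metis
    qed
    then show ?thesis unfolding eventually_nhds_conv_at A_def X_def using Au Bu Xu unfolding A_def X_def by simp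
  qed
  have E2all: "eventually (\<lambda>z. \<forall>m\<in>{..<N}. s k (u(j:=z)) (t m) = f z m (p k (u(j:=z)) (t m))) (nhds (u j))"
    by (rule eventually_ball_finite) (use E2 in auto)
  have insz: "p k (u(j:=z)) t' \<in> ball (c m) r \<and> s k (u(j:=z)) t' = f z m (p k (u(j:=z)) t')"
    if z1: "dist z (u j) < min (min \<rho> \<epsilon>1) (r/2)"
      and z2: "\<forall>m\<in>{..<N}. s k (u(j:=z)) (t m) = f z m (p k (u(j:=z)) (t m))"
      and m: "m < N" and t': "t' \<in> {real m / N .. real (Suc m) / N}" for z m t'
  proof -
    have wU: "u(j:=z) \<in> U" using z1 \<rho> by (auto simp: dist_commute)
    note Lw = loop[OF wU k]
    have zr: "dist z (u j) < r/2" using z1 by simp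
    have Sub: "{t m .. t (Suc m)} \<subseteq> {0..1}" using t01[of m] t01[of "Suc m"] m by auto
    have inb: "p k (u(j:=z)) \<tau> \<in> ball (c m) r" if \<tau>: "\<tau> \<in> {t m .. t (Suc m)}" for \<tau>
    proof -
      have \<tau>01: "\<tau> \<in> {0..1}" using \<tau> Sub by auto
      have "\<bar>\<tau> - t m\<bar> \<le> 1/N" using \<tau> tstep[of m] by auto
      then have "dist (p k u \<tau>) (c m) < r/2" unfolding c_def using F1[OF t01[of m] \<tau>01] m by simp
      moreover have "dist (p k (u(j:=z)) \<tau>) (p k u \<tau>) < r/2" using F2[OF _ \<tau>01] z1 by simp
      ultimately have "dist (p k (u(j:=z)) \<tau>) (c m) < r" using dist_triangle_half_l
        by (metis dist_commute dist_triangle_half_r)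
      then show ?thesis by (simp add: dist_commute)
    qed
    have agree: "\<forall>\<tau>\<in>{t m .. t (Suc m)}. s k (u(j:=z)) \<tau> = f z m (p k (u(j:=z)) \<tau>)"
    proof (rule sqrt_agree[OF connected_Icc])
      show "continuous_on {t m .. t (Suc m)} (s k (u(j:=z)))" by (rule continuous_on_subset[OF Lw(3) Sub])
      show "continuous_on {t m .. t (Suc m)} (\<lambda>\<tau>. f z m (p k (u(j:=z)) \<tau>))"
        by (rule continuous_on_compose2[OF holomorphic_on_imp_continuous_on[OF fh[of m z]] continuous_on_subset[OF Lw(8) Sub]])
           (use m zr inb in auto)
      show "\<forall>\<tau>\<in>{t m .. t (Suc m)}. f z m (p k (u(j:=z)) \<tau>) \<noteq> 0" using fnz inb m zr by auto
      show "\<forall>\<tau>\<in>{t m .. t (Suc m)}. (s k (u(j:=z)) \<tau>)^2 = (f z m (p k (u(j:=z)) \<tau>))^2"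
      proof
        fix \<tau> assume \<tau>: "\<tau> \<in> {t m .. t (Suc m)}"
        have "(s k (u(j:=z)) \<tau>)^2 = (\<Prod>i\<in>I. p k (u(j:=z)) \<tau> - branch (u(j:=z)) i)"
          using Lw(5)[of \<tau>] \<tau> Sub unfolding I_def by auto
        also have "\<dots> = (f z m (p k (u(j:=z)) \<tau>))^2" using fsq[OF _ inb[OF \<tau>] zr] m by simp
        finally show "(s k (u(j:=z)) \<tau>)^2 = (f z m (p k (u(j:=z)) \<tau>))^2" .
      qed
      have pos: "1 / real N > 0" using N0 by simp
      have "t m \<le> t (Suc m)" using tstep[of m] pos by linarith
      then show "t m \<in> {t m .. t (Suc m)}" by simp
      show "s k (u(j:=z)) (t m) = f z m (p k (u(j:=z)) (t m))" using z2 m by simp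
    qed
    have t'': "t' \<in> {t m .. t (Suc m)}" using t' unfolding t_def by simp
    show "p k (u(j:=z)) t' \<in> ball (c m) r \<and> s k (u(j:=z)) t' = f z m (p k (u(j:=z)) t')"
      using inb[OF t''] agree t'' by blast
  qed
  have main: "((\<lambda>t. vector_derivative (p k (u(j:=z))) (at t within {0..1}) * (h (p k (u(j:=z)) t) / s k (u(j:=z)) t)) has_integral
         (\<Sum>m<N. contour_integral (linepath (c m) (c (Suc m))) (\<lambda>x. h x / f z m x))) {0..1}"
    if z1: "dist z (u j) < min (min \<rho> \<epsilon>1) (r/2)"
      and z2: "\<forall>m\<in>{..<N}. s k (u(j:=z)) (t m) = f z m (p k (u(j:=z)) (t m))"
      and hh: "h holomorphic_on -(branch (u(j:=z)) ` {1..2*g+1})" for z h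
  proof -
    have wU: "u(j:=z) \<in> U" using z1 \<rho> by (auto simp: dist_commute)
    note Lw = loop[OF wU k]
    have zr: "dist z (u j) < r/2" using z1 by simp
    show ?thesis
    proof (rule chord[OF N0 r Lw(1) Lw(2) Lw(4), where Q="\<lambda>x. \<Prod>i\<in>I. x - branch (u(j:=z)) i"])
      show "c N = c 0" unfolding c_def t_def using L(2) N0 by simp
      show "f z N = f z 0" unfolding f_def[abs_def] F_def c_def t_def using L(2) L(4) N0 by simp
      show "\<And>m. m \<le> N \<Longrightarrow> f z m holomorphic_on ball (c m) r" using fh zr by blast
      show "\<And>m x. m \<le> N \<Longrightarrow> x \<in> ball (c m) r \<Longrightarrow> f z m x \<noteq> 0" using fnz zr by blast
      show "\<And>m x. m \<le> N \<Longrightarrow> x \<in> ball (c m) r \<Longrightarrow> (f z m x)^2 = (\<Prod>i\<in>I. x - branch (u(j:=z)) i)"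
        using fsq zr by blast
      show "\<And>m. m \<le> N \<Longrightarrow> h holomorphic_on ball (c m) r"
      proof (rule holomorphic_on_subset[OF hh])
        fix m assume m: "m \<le> N"
        show "ball (c m) r \<subseteq> -(branch (u(j:=z)) ` {1..2*g+1})"
        proof
          fix x assume x: "x \<in> ball (c m) r"
          have "x \<noteq> branch (u(j:=z)) i" if "i \<in> I" for i
          proof (cases "i = j")
            case True then show ?thesis using xz[OF m x zr] jI by (simp add: branch_upd)
          next
            case False then show ?thesis using far[OF m x that] r jI by (auto simp: branch_upd)
          qed
          then have "x \<notin> branch (u(j:=z)) ` I" by blast
          then show "x \<in> -(branch (u(j:=z)) ` {1..2*g+1})" unfolding I_def by simp
        qed
      qed
      show "\<And>m. m < N \<Longrightarrow> c (Suc m) \<in> ball (c m) r" by (rule cc)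
      show "\<And>m t'. m < N \<Longrightarrow> t' \<in> {real m / N .. real (Suc m) / N} \<Longrightarrow>
              p k (u(j:=z)) t' \<in> ball (c m) r \<and> s k (u(j:=z)) t' = f z m (p k (u(j:=z)) t')"
        using insz[OF z1 z2] by blast
    qed
  qed
  show ?thesis
  proof (rule that[OF N0 r])
    show "\<And>m i. m \<le> N \<Longrightarrow> i \<in> {1..2*g+1} \<Longrightarrow> 2 * r \<le> norm (p k u (real m / real N) - branch u i)"
      using hb unfolding c_def t_def I_def by auto
    show "\<And>m. m < N \<Longrightarrow> p k u (real (Suc m) / real N) \<in> ball (p k u (real m / real N)) r"
      using cc unfolding c_def t_def by auto
    show "\<And>m t'. m < N \<Longrightarrow> t' \<in> {real m/N .. real (Suc m)/N} \<Longrightarrow>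
       p k u t' \<in> ball (p k u (real m/N)) r \<and>
       s k u t' = bsq (branch u) {1..2*g+1} (p k u (real m/N)) (s k u (real m/N)) (p k u t')"
    proof -
      fix m t' assume m: "m < N" and t': "t' \<in> {real m/N .. real (Suc m)/N}"
      have z1: "dist (u j) (u j) < min (min \<rho> \<epsilon>1) (r/2)" using \<rho> \<epsilon>1 r by simp
      have z2: "\<forall>m\<in>{..<N}. s k (u(j:=u j)) (t m) = f (u j) m (p k (u(j:=u j)) (t m))"
        using eventually_nhds_x_imp_x[OF E2all] .
      have A: "p k u t' \<in> ball (c m) r \<and> s k u t' = f (u j) m (p k u t')"
        using insz[OF z1 z2 m t'] by simp
      have "p k u t' \<noteq> u j" using rat[of m "p k u t'" "u j"] A m r by simp
      then have "f (u j) m (p k u t') = F m (p k u t')" unfolding f_def by simp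
      then show "p k u t' \<in> ball (p k u (real m/N)) r \<and>
       s k u t' = bsq (branch u) {1..2*g+1} (p k u (real m/N)) (s k u (real m/N)) (p k u t')"
        using A unfolding F_def c_def t_def I_def by simp
    qed
    show "eventually (\<lambda>z. \<forall>h. h holomorphic_on -(branch (u(j:=z)) ` {1..2*g+1}) \<longrightarrow>
        ((\<lambda>t. vector_derivative (p k (u(j:=z))) (at t within {0..1}) * (h (p k (u(j:=z)) t) / s k (u(j:=z)) t)) has_integral
         (\<Sum>m<N. contour_integral (linepath (p k u (real m/N)) (p k u (real (Suc m)/N)))
            (\<lambda>x. h x / (bsq (branch u) {1..2*g+1} (p k u (real m/N)) (s k u (real m/N)) x * csqrt ((x - z)/(x - u j)))))) {0..1}) (nhds (u j))"
      using eventually_conj[OF E1 E2all]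
    proof (rule eventually_mono)
      fix z assume z: "dist z (u j) < min (min \<rho> \<epsilon>1) (r/2) \<and> (\<forall>m\<in>{..<N}. s k (u(j:=z)) (t m) = f z m (p k (u(j:=z)) (t m)))"
      show "\<forall>h. h holomorphic_on -(branch (u(j:=z)) ` {1..2*g+1}) \<longrightarrow>
        ((\<lambda>t. vector_derivative (p k (u(j:=z))) (at t within {0..1}) * (h (p k (u(j:=z)) t) / s k (u(j:=z)) t)) has_integral
         (\<Sum>m<N. contour_integral (linepath (p k u (real m/N)) (p k u (real (Suc m)/N)))
            (\<lambda>x. h x / (bsq (branch u) {1..2*g+1} (p k u (real m/N)) (s k u (real m/N)) x * csqrt ((x - z)/(x - u j)))))) {0..1}"
        using main[of z] z unfolding f_def F_def c_def t_def I_def by blast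
    qed
  qed
qed

end

definition cons_ok :: "nat \<Rightarrow> (nat \<Rightarrow> (nat \<Rightarrow> complex) \<Rightarrow> real \<Rightarrow> complex) \<Rightarrow> (nat \<Rightarrow> (nat \<Rightarrow> complex) \<Rightarrow> real \<Rightarrow> complex)
   \<Rightarrow> (nat \<Rightarrow> complex) \<Rightarrow> nat \<Rightarrow> nat \<Rightarrow> nat \<Rightarrow> real \<Rightarrow> bool" where
  "cons_ok g p s u j k N r \<longleftrightarrow> N > 0 \<and> r > 0 \<and>
    (\<forall>m i. m \<le> N \<longrightarrow> i \<in> {1..2*g+1} \<longrightarrow> 2*r \<le> norm (p k u (real m/N) - branch u i)) \<and>
    (\<forall>m. m < N \<longrightarrow> p k u (real (Suc m)/N) \<in> ball (p k u (real m/N)) r) \<and>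
    (\<forall>m t'. m < N \<longrightarrow> t' \<in> {real m/N .. real (Suc m)/N} \<longrightarrow>
       p k u t' \<in> ball (p k u (real m/N)) r \<and>
       s k u t' = bsq (branch u) {1..2*g+1} (p k u (real m/N)) (s k u (real m/N)) (p k u t')) \<and>
    eventually (\<lambda>z. \<forall>h. h holomorphic_on -(branch (u(j:=z)) ` {1..2*g+1}) \<longrightarrow>
        ((\<lambda>t. vector_derivative (p k (u(j:=z))) (at t within {0..1}) * (h (p k (u(j:=z)) t) / s k (u(j:=z)) t)) has_integral
         (\<Sum>m<N. contour_integral (linepath (p k u (real m/N)) (p k u (real (Suc m)/N)))
            (\<lambda>x. h x / (bsq (branch u) {1..2*g+1} (p k u (real m/N)) (s k u (real m/N)) x * csqrt ((x - z)/(x - u j)))))) {0..1}) (nhds (u j))"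

context hsetup begin
lemma construct2:
  assumes u: "u \<in> U" and j: "j \<in> {2..2*g+1}" and k: "k \<in> {1..2*g}"
  shows "\<exists>N r. cons_ok g p s u j k N r"
proof (rule construct[OF u j k])
  fix N r
  assume a: "0 < N" "0 < r"
    "\<And>m i. m \<le> N \<Longrightarrow> i \<in> {1..2*g+1} \<Longrightarrow> 2*r \<le> norm (p k u (real m/N) - branch u i)"
    "\<And>m. m < N \<Longrightarrow> p k u (real (Suc m)/N) \<in> ball (p k u (real m/N)) r"
    "\<And>m t'. m < N \<Longrightarrow> t' \<in> {real m/N .. real (Suc m)/N} \<Longrightarrow>
       p k u t' \<in> ball (p k u (real m/N)) r \<and>
       s k u t' = bsq (branch u) {1..2*g+1} (p k u (real m/N)) (s k u (real m/N)) (p k u t')"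
    "eventually (\<lambda>z. \<forall>h. h holomorphic_on -(branch (u(j:=z)) ` {1..2*g+1}) \<longrightarrow>
        ((\<lambda>t. vector_derivative (p k (u(j:=z))) (at t within {0..1}) * (h (p k (u(j:=z)) t) / s k (u(j:=z)) t)) has_integral
         (\<Sum>m<N. contour_integral (linepath (p k u (real m/N)) (p k u (real (Suc m)/N)))
            (\<lambda>x. h x / (bsq (branch u) {1..2*g+1} (p k u (real m/N)) (s k u (real m/N)) x * csqrt ((x - z)/(x - u j)))))) {0..1}) (nhds (u j))"
  have "cons_ok g p s u j k N r" unfolding cons_ok_def
    apply (intro conjI allI impI)
         apply (rule a(1))
        apply (rule a(2))
       apply (erule (1) a(3))
      apply (erule a(4))
     apply (erule (1) a(5)[THEN conjunct1])
    apply (erule (1) a(5)[THEN conjunct2])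
   apply (rule a(6))
    done
  then show "\<exists>N r. cons_ok g p s u j k N r" by blast
qed
end

lemma chord_deriv:
  fixes a b u0 :: complex and F h :: "complex \<Rightarrow> complex"
  assumes R: "R > 0" and seg: "closed_segment a b \<subseteq> D" and D: "open D"
    and Fh: "F holomorphic_on D" and Fnz: "\<forall>x\<in>D. F x \<noteq> 0" and hh: "h holomorphic_on D"
    and far: "\<forall>x\<in>D. 2*R < norm (x - u0)"
  shows "((\<lambda>z. contour_integral (linepath a b) (\<lambda>x. h x / (F x * csqrt ((x - z)/(x - u0))))) has_field_derivative
          contour_integral (linepath a b) (\<lambda>x. h x / (2*(x - u0)) / (F x * csqrt ((x - u0)/(x - u0))))) (at u0)"
proof -
  define K where "K z x = h x / (F x * csqrt ((x - z)/(x - u0)))" for z x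
  define Kx where "Kx z x = h x / (2*(x - z)) / (F x * csqrt ((x - z)/(x - u0)))" for z x
  have good: "(x - z)/(x - u0) \<notin> \<real>\<^sub>\<le>\<^sub>0" "x \<noteq> z" "x \<noteq> u0" if x: "x \<in> D" and z: "z \<in> ball u0 R" for x z
  proof -
    have nz: "norm (z - u0) < R" using z by (simp add: dist_norm norm_minus_commute)
    have fx: "2*R < norm (x - u0)" using far x by auto
    then have "norm (z - u0) < norm (u0 - x)" using nz R by (simp add: norm_minus_commute)
    then have "(z - x) / (u0 - x) \<notin> \<real>\<^sub>\<le>\<^sub>0" by (rule ratio_good)
    moreover have "(z - x) / (u0 - x) = (x - z)/(x - u0)" by (metis minus_diff_eq minus_divide_divide)
    ultimately show "(x - z)/(x - u0) \<notin> \<real>\<^sub>\<le>\<^sub>0" by simp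
    show "x \<noteq> u0" using fx R by auto
    show "x \<noteq> z"
    proof
      assume "x = z" then have "norm (x - u0) < R" using nz by simp
      then show False using fx R by simp
    qed
  qed
  have cs_nz: "csqrt ((x - z)/(x - u0)) \<noteq> 0" if "x \<in> D" "z \<in> ball u0 R" for x z
    using good[OF that] by auto
  have dK: "((\<lambda>z. K z x) has_field_derivative Kx z x) (at z)" if x: "x \<in> D" and z: "z \<in> ball u0 R" for x z
  proof -
    note gd = good[OF x z]
    define q where "q = csqrt ((x - z)/(x - u0))"
    have qq: "q * q = (x - z)/(x - u0)" unfolding q_def by (metis power2_csqrt power2_eq_square)
    have qnz: "q \<noteq> 0" using cs_nz[OF x z] unfolding q_def .
    have Fx: "F x \<noteq> 0" using Fnz x by auto
    have d1: "((\<lambda>z. csqrt ((x - z)/(x - u0))) has_field_derivative (- 1 / (x - u0)) / (2 * q)) (at z)"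
    proof -
      have "((\<lambda>z. x - z) has_field_derivative -1) (at z)" by (auto intro!: derivative_eq_intros)
      then have "((\<lambda>z. (x - z)/(x - u0)) has_field_derivative -1 / (x - u0)) (at z)" by (rule DERIV_cdivide)
      from has_field_derivative_csqrt'[where f="\<lambda>z. (x - z)/(x - u0)", OF this gd(1)]
      show ?thesis unfolding q_def .
    qed
    have d2: "((\<lambda>z. h x / (F x * csqrt ((x - z)/(x - u0)))) has_field_derivative
              - (h x * (F x * ((- 1 / (x - u0)) / (2 * q)))) / (F x * q)^2) (at z)"
      using DERIV_divide[OF DERIV_const DERIV_cmult[OF d1, of "F x"], of "h x"] Fx qnz
      unfolding q_def by (simp add: power2_eq_square)
    have "- (h x * (F x * ((- 1 / (x - u0)) / (2 * q)))) / (F x * q)^2 = h x / (2 * ((x - u0) * (q * q)) * (F x * q))"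
      using Fx qnz gd by (simp add: field_simps power2_eq_square)
    also have "(x - u0) * (q * q) = x - z" using qq gd by (simp add: field_simps)
    finally have "- (h x * (F x * ((- 1 / (x - u0)) / (2 * q)))) / (F x * q)^2 = Kx z x"
      unfolding Kx_def q_def using gd by (simp add: field_simps)
    then show ?thesis using d2 unfolding K_def by simp
  qed
  have hc: "isCont h x" "isCont F x" if "x \<in> D" for x
    using continuous_on_interior[OF holomorphic_on_imp_continuous_on[OF hh]] continuous_on_interior[OF holomorphic_on_imp_continuous_on[OF Fh]]
      that D by (auto simp: interior_open)
  have cK: "continuous_on (ball u0 R \<times> D) (\<lambda>q. K (fst q) (snd q))"
    and cKx: "continuous_on (ball u0 R \<times> D) (\<lambda>q. Kx (fst q) (snd q))"
  proof -
    have "isCont (\<lambda>q. K (fst q) (snd q)) q \<and> isCont (\<lambda>q. Kx (fst q) (snd q)) q" if q: "q \<in> ball u0 R \<times> D" for q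
    proof -
      obtain z x where qe: "q = (z, x)" and z: "z \<in> ball u0 R" and x: "x \<in> D" using q by auto
      note gd = good[OF x z]
      have cs0: "isCont snd (z, x)" by (intro continuous_intros)
      have ch: "isCont (\<lambda>q. h (snd q)) (z, x)" using isCont_o2[OF cs0, of h] hc(1)[OF x] by simp
      have cF: "isCont (\<lambda>q. F (snd q)) (z, x)" using isCont_o2[OF cs0, of F] hc(2)[OF x] by simp
      have cs: "isCont (\<lambda>q. csqrt ((snd q - fst q)/(snd q - u0))) (z, x)"
        by (rule isCont_csqrt') (use gd in \<open>auto intro!: continuous_intros\<close>)
      have Fx: "F x \<noteq> 0" using Fnz x by auto
      have "isCont (\<lambda>q. h (snd q) / (F (snd q) * csqrt ((snd q - fst q)/(snd q - u0)))) (z, x)"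
        by (intro continuous_intros ch cF cs) (use Fx cs_nz[OF x z] in auto)
      moreover have "isCont (\<lambda>q. h (snd q) / (2 * (snd q - fst q)) / (F (snd q) * csqrt ((snd q - fst q)/(snd q - u0)))) (z, x)"
        by (intro continuous_intros ch cF cs) (use Fx cs_nz[OF x z] gd in auto)
      ultimately show ?thesis unfolding K_def Kx_def qe by simp
    qed
    then show "continuous_on (ball u0 R \<times> D) (\<lambda>q. K (fst q) (snd q))"
      "continuous_on (ball u0 R \<times> D) (\<lambda>q. Kx (fst q) (snd q))"
      by (auto intro!: continuous_at_imp_continuous_on)
  qed
  define L where "L = linepath a b"
  have Lin: "L t \<in> D" if "t \<in> {0..1}" for t using seg that linepath_image_01[of a b] unfolding L_def by blast
  have cpair: "continuous_on (ball u0 R \<times> {0..1}) (\<lambda>q. (fst q, L (snd q)))"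
  proof -
    have "continuous_on (ball u0 R \<times> {0..1}) (\<lambda>q. L (snd q))"
      unfolding L_def by (rule continuous_on_compose2[OF continuous_on_linepath[of UNIV] continuous_on_snd]) auto
    then show ?thesis by (intro continuous_intros)
  qed
  have ipair: "(\<lambda>q. (fst q, L (snd q))) ` (ball u0 R \<times> {0..1}) \<subseteq> ball u0 R \<times> D" using Lin by auto
  have CI: "contour_integral L (K z) = integral (cbox 0 1) (\<lambda>t. K z (L t) * (b - a))" for z
    unfolding contour_integral_integral L_def cbox_interval vector_derivative_linepath_at ..
  have CIx: "contour_integral L (Kx u0) = integral (cbox 0 1) (\<lambda>t. Kx u0 (L t) * (b - a))"
    unfolding contour_integral_integral L_def cbox_interval vector_derivative_linepath_at ..
  have lr: "((\<lambda>z. integral (cbox 0 1) (\<lambda>t. K z (L t) * (b - a))) has_field_derivative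
            integral (cbox 0 1) (\<lambda>t. Kx u0 (L t) * (b - a))) (at u0 within ball u0 R)"
  proof (rule leibniz_rule_field_derivative[where fx="\<lambda>z t. Kx z (L t) * (b - a)" and f="\<lambda>z t. K z (L t) * (b - a)" and U="ball u0 R"])
    show "\<And>z t. z \<in> ball u0 R \<Longrightarrow> t \<in> cbox 0 1 \<Longrightarrow>
            ((\<lambda>z. K z (L t) * (b - a)) has_field_derivative Kx z (L t) * (b - a)) (at z within ball u0 R)"
    proof -
      fix z t assume z: "z \<in> ball u0 R" and t: "t \<in> cbox 0 (1::real)"
      have "L t \<in> D" using Lin t by simp
      from DERIV_cmult_right[OF dK[OF this z], of "b - a"]
      show "((\<lambda>z. K z (L t) * (b - a)) has_field_derivative Kx z (L t) * (b - a)) (at z within ball u0 R)"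
        by (rule has_field_derivative_at_within)
    qed
    show "\<And>z. z \<in> ball u0 R \<Longrightarrow> (\<lambda>t. K z (L t) * (b - a)) integrable_on cbox 0 1"
    proof -
      fix z assume z: "z \<in> ball u0 R"
      have "continuous_on (ball u0 R \<times> {0..1}) (\<lambda>q. K (fst q) (L (snd q)))"
        using continuous_on_compose2[OF cK cpair ipair] by simp
      moreover have "continuous_on {0..1} (\<lambda>t::real. (z, t))" by (intro continuous_intros)
      moreover have "(\<lambda>t::real. (z, t)) ` {0..1} \<subseteq> ball u0 R \<times> {0..1}" using z by auto
      ultimately have "continuous_on {0..1} (\<lambda>t. K z (L t))"
        using continuous_on_compose2[of "ball u0 R \<times> {0..1}" "\<lambda>q. K (fst q) (L (snd q))" "{0..1}" "\<lambda>t. (z, t)"]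
        by simp
      then have "continuous_on (cbox 0 1) (\<lambda>t. K z (L t) * (b - a))" by (auto intro!: continuous_intros)
      then show "(\<lambda>t. K z (L t) * (b - a)) integrable_on cbox 0 1" by (rule integrable_continuous)
    qed
    show "continuous_on (ball u0 R \<times> cbox 0 1) (\<lambda>(z, t). Kx z (L t) * (b - a))"
    proof -
      have "continuous_on (ball u0 R \<times> {0..1}) (\<lambda>q. Kx (fst q) (L (snd q)))"
        using continuous_on_compose2[OF cKx cpair ipair] by simp
      then have "continuous_on (ball u0 R \<times> {0..1}) (\<lambda>q. Kx (fst q) (L (snd q)) * (b - a))"
        by (auto intro!: continuous_intros)
      then show ?thesis by (simp add: split_beta)
    qed
    show "u0 \<in> ball u0 R" using R by simp
  qed (rule convex_ball)
  then have "((\<lambda>z. contour_integral L (K z)) has_field_derivative contour_integral L (Kx u0)) (at u0)"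
    using CI CIx at_within_open[of u0 "ball u0 R"] R by simp
  then show ?thesis unfolding L_def K_def Kx_def by simp
qed

context hsetup begin

lemma deriv_Per:
  assumes u: "u \<in> U" and j: "j \<in> {2..2*g+1}" and k: "k \<in> {1..2*g}"
    and hh: "h holomorphic_on -(branch u ` ({1..2*g+1} - {j}))"
  shows "((\<lambda>z. Per h (p k (u(j:=z))) (s k (u(j:=z)))) has_field_derivative
           Per (\<lambda>x. h x / (2*(x - u j))) (p k u) (s k u)) (at (u j))"
proof -
  obtain N r where co: "cons_ok g p s u j k N r" using construct2[OF u j k] by blast
  note co' = co[unfolded cons_ok_def]
  have N: "N > 0" using co' by blast
  have r: "r > 0" using co' by blast
  note hb = co'[THEN conjunct2, THEN conjunct2, THEN conjunct1, rule_format]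
  note cc = co'[THEN conjunct2, THEN conjunct2, THEN conjunct2, THEN conjunct1, rule_format]
  note ins = co'[THEN conjunct2, THEN conjunct2, THEN conjunct2, THEN conjunct2, THEN conjunct1, rule_format]
  note ev = co'[THEN conjunct2, THEN conjunct2, THEN conjunct2, THEN conjunct2, THEN conjunct2]
  define I where "I = {1..2*g+1}"
  have jI: "j \<in> I" "j \<noteq> 1" using j unfolding I_def by auto
  define c where "c m = p k u (real m/N)" for m
  define F where "F m = bsq (branch u) I (c m) (s k u (real m/N))" for m
  define C where "C z = (\<Sum>m<N. contour_integral (linepath (c m) (c (Suc m))) (\<lambda>x. h x / (F m x * csqrt ((x - z)/(x - u j)))))" for z
  have sub: "-(branch (u(j:=z)) ` {1..2*g+1}) \<subseteq> -(branch u ` ({1..2*g+1} - {j}))" for z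
    using jI unfolding I_def by (auto simp: branch_upd)
  have evP: "eventually (\<lambda>z. Per h (p k (u(j:=z))) (s k (u(j:=z))) = C z) (nhds (u j))"
    using ev
  proof (rule eventually_mono)
    fix z assume H: "\<forall>h. h holomorphic_on -(branch (u(j:=z)) ` {1..2*g+1}) \<longrightarrow>
        ((\<lambda>t. vector_derivative (p k (u(j:=z))) (at t within {0..1}) * (h (p k (u(j:=z)) t) / s k (u(j:=z)) t)) has_integral
         (\<Sum>m<N. contour_integral (linepath (p k u (real m/N)) (p k u (real (Suc m)/N)))
            (\<lambda>x. h x / (bsq (branch u) {1..2*g+1} (p k u (real m/N)) (s k u (real m/N)) x * csqrt ((x - z)/(x - u j)))))) {0..1}"
    have "h holomorphic_on -(branch (u(j:=z)) ` {1..2*g+1})"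
      using holomorphic_on_subset[OF hh sub[of z]] .
    with H have "((\<lambda>t. vector_derivative (p k (u(j:=z))) (at t within {0..1}) * (h (p k (u(j:=z)) t) / s k (u(j:=z)) t)) has_integral C z) {0..1}"
      unfolding C_def c_def F_def I_def by blast
    then show "Per h (p k (u(j:=z))) (s k (u(j:=z))) = C z" unfolding Per_def by (rule integral_unique)
  qed
  note L = loop[OF u k]
  have t01: "real m / N \<in> {0..1}" if "m \<le> N" for m using that N by (auto simp: field_simps)
  have hb1: "\<forall>i\<in>I. r \<le> norm (c m - branch u i)" if "m \<le> N" for m
    using hb[OF that] r unfolding c_def I_def by force
  have far: "r < norm (x - branch u i)" if "m \<le> N" "x \<in> ball (c m) r" "i \<in> I" for m x i
  proof -
    have "norm (c m - branch u i) \<le> norm (c m - x) + norm (x - branch u i)"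
      using norm_triangle_ineq[of "c m - x" "x - branch u i"] by simp
    moreover have "norm (c m - x) < r" using that(2) by (simp add: dist_norm)
    ultimately show ?thesis using hb[OF that(1)] that(3) unfolding c_def I_def by force
  qed
  have uj_b: "branch u j = u j" using jI by (simp add: branch_def)
  have dC: "(C has_field_derivative (\<Sum>m<N. contour_integral (linepath (c m) (c (Suc m)))
              (\<lambda>x. h x / (2*(x - u j)) / (F m x * csqrt ((x - u j)/(x - u j)))))) (at (u j))"
    unfolding C_def
  proof (rule DERIV_sum)
    fix m assume "m \<in> {..<N}"
    then have m: "m < N" "m \<le> N" by auto
    show "((\<lambda>z. contour_integral (linepath (c m) (c (Suc m))) (\<lambda>x. h x / (F m x * csqrt ((x - z)/(x - u j)))))
           has_field_derivative contour_integral (linepath (c m) (c (Suc m)))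
              (\<lambda>x. h x / (2*(x - u j)) / (F m x * csqrt ((x - u j)/(x - u j))))) (at (u j))"
    proof (rule chord_deriv[of "r/2" _ _ "ball (c m) r"])
      show "r/2 > 0" using r by simp
      show "closed_segment (c m) (c (Suc m)) \<subseteq> ball (c m) r"
        using cc[OF m(1)] r unfolding c_def by (intro closed_segment_subset) auto
      show "F m holomorphic_on ball (c m) r" unfolding F_def by (rule bsq_holo) (use hb1[OF m(2)] in \<open>auto simp: I_def\<close>)
      show "\<forall>x\<in>ball (c m) r. F m x \<noteq> 0"
        unfolding F_def using bsq_nz[of I r "c m" "branch u" "s k u (real m/N)"] hb1[OF m(2)] L(7)[OF t01[OF m(2)]]
        by (auto simp: I_def)
      show "h holomorphic_on ball (c m) r"
      proof (rule holomorphic_on_subset[OF hh])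
        show "ball (c m) r \<subseteq> -(branch u ` ({1..2*g+1} - {j}))"
          using far[OF m(2)] r unfolding I_def by fastforce
      qed
      show "\<forall>x\<in>ball (c m) r. 2 * (r/2) < norm (x - u j)" using far[OF m(2) _ jI(1)] uj_b by simp
    qed simp
  qed
  have evu: "((\<lambda>t. vector_derivative (p k u) (at t within {0..1}) * ((\<lambda>x. h x / (2*(x - u j))) (p k u t) / s k u t)) has_integral
         (\<Sum>m<N. contour_integral (linepath (c m) (c (Suc m)))
              (\<lambda>x. h x / (2*(x - u j)) / (F m x * csqrt ((x - u j)/(x - u j)))))) {0..1}"
  proof -
    have H: "\<forall>h. h holomorphic_on -(branch (u(j:=u j)) ` {1..2*g+1}) \<longrightarrow>
        ((\<lambda>t. vector_derivative (p k (u(j:=u j))) (at t within {0..1}) * (h (p k (u(j:=u j)) t) / s k (u(j:=u j)) t)) has_integral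
         (\<Sum>m<N. contour_integral (linepath (p k u (real m/N)) (p k u (real (Suc m)/N)))
            (\<lambda>x. h x / (bsq (branch u) {1..2*g+1} (p k u (real m/N)) (s k u (real m/N)) x * csqrt ((x - u j)/(x - u j)))))) {0..1}"
      using eventually_nhds_x_imp_x[OF ev] .
    have holo: "(\<lambda>x. h x / (2*(x - u j))) holomorphic_on -(branch u ` {1..2*g+1})"
    proof (intro holomorphic_intros)
      show "h holomorphic_on -(branch u ` {1..2*g+1})" by (rule holomorphic_on_subset[OF hh]) auto
      show "\<And>x. x \<in> -(branch u ` {1..2*g+1}) \<Longrightarrow> 2 * (x - u j) \<noteq> 0"
        using jI uj_b unfolding I_def by force
    qed
    note H' = H[unfolded fun_upd_triv]
    show ?thesis unfolding c_def F_def I_def by (rule H'[rule_format, OF holo])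
  qed
  have "Per (\<lambda>x. h x / (2*(x - u j))) (p k u) (s k u) = (\<Sum>m<N. contour_integral (linepath (c m) (c (Suc m)))
              (\<lambda>x. h x / (2*(x - u j)) / (F m x * csqrt ((x - u j)/(x - u j)))))"
    unfolding Per_def using integral_unique[OF evu] by simp
  then show ?thesis using DERIV_cong_ev[OF refl evP refl] dC by simp
qed

end

lemma period_Per: "period q w = Per (\<lambda>_. 1) q w"
  unfolding period_def Per_def by simp

lemma period_pole_Per: "period_pole q w z = Per (\<lambda>x. 1 / (x - z)) q w"
  unfolding period_pole_def Per_def by (simp add: field_simps)

lemma hsum_id:
  fixes u :: "nat \<Rightarrow> complex" and x :: complex
  assumes x0: "x \<noteq> 0" and xu: "\<forall>i\<in>{2..2*g+1}. x \<noteq> u i"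
  shows "-2 + 2 * x * (\<Sum>i\<in>{1..2*g+1}. 1 / (2 * (x - branch u i))) =
         (2 * of_nat g - 1) + (\<Sum>i\<in>{2..2*g+1}. u i / (x - u i))"
proof -
  have I: "{1..2*g+1} = insert 1 {2..2*g+1}" by auto
  have "2 * x * (\<Sum>i\<in>{1..2*g+1}. 1 / (2 * (x - branch u i))) = (\<Sum>i\<in>{1..2*g+1}. x / (x - branch u i))"
    unfolding sum_distrib_left
  proof (rule sum.cong)
    fix i show "2 * x * (1 / (2 * (x - branch u i))) = x / (x - branch u i)"
      by (cases "x = branch u i") (auto simp: field_simps)
  qed simp
  also have "\<dots> = x / (x - 0) + (\<Sum>i\<in>{2..2*g+1}. x / (x - u i))"
    unfolding I by (simp add: branch_def)
  also have "(\<Sum>i\<in>{2..2*g+1}. x / (x - u i)) = (\<Sum>i\<in>{2..2*g+1}. 1 + u i / (x - u i))"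
  proof (rule sum.cong)
    fix i assume "i \<in> {2..2*g+1}"
    then have "x - u i \<noteq> 0" using xu by auto
    then show "x / (x - u i) = 1 + u i / (x - u i)" by (simp add: field_simps)
  qed simp
  also have "\<dots> = of_nat (2*g) + (\<Sum>i\<in>{2..2*g+1}. u i / (x - u i))"
    by (simp add: sum.distrib)
  finally show ?thesis using x0 by simp
qed

context hsetup begin

lemma Per_has_integral:
  assumes g: "g \<ge> 1" and u: "u \<in> U" and k: "k \<in> {1..2*g}"
    and hh: "h holomorphic_on -(branch u ` {1..2*g+1})"
  shows "((\<lambda>t. vector_derivative (p k u) (at t within {0..1}) * (h (p k u t) / s k u t)) has_integral
           Per h (p k u) (s k u)) {0..1}"
proof -
  have j: "2 \<in> {2..2*g+1}" using g by simp
  obtain N r where co: "cons_ok g p s u 2 k N r" using construct2[OF u j k] by blast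
  note co' = co[unfolded cons_ok_def]
  have N: "N > 0" using co' by blast
  have r: "r > 0" using co' by blast
  note hb = co'[THEN conjunct2, THEN conjunct2, THEN conjunct1, rule_format]
  note cc = co'[THEN conjunct2, THEN conjunct2, THEN conjunct2, THEN conjunct1, rule_format]
  note ins = co'[THEN conjunct2, THEN conjunct2, THEN conjunct2, THEN conjunct2, THEN conjunct1, rule_format]
  note ev = co'[THEN conjunct2, THEN conjunct2, THEN conjunct2, THEN conjunct2, THEN conjunct2]
  note H = eventually_nhds_x_imp_x[OF ev, unfolded fun_upd_triv]
  have "((\<lambda>t. vector_derivative (p k u) (at t within {0..1}) * (h (p k u t) / s k u t)) has_integral
         (\<Sum>m<N. contour_integral (linepath (p k u (real m/N)) (p k u (real (Suc m)/N)))
            (\<lambda>x. h x / (bsq (branch u) {1..2*g+1} (p k u (real m/N)) (s k u (real m/N)) x * csqrt ((x - u 2)/(x - u 2)))))) {0..1}"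
    (is "(?f has_integral ?S) _") by (rule H[rule_format, OF hh])
  moreover from this have "integral {0..1} ?f = ?S" by (rule integral_unique)
  ultimately show ?thesis unfolding Per_def by simp
qed

lemma Per_hsum_zero:
  assumes g: "g \<ge> 1" and u: "u \<in> U" and k: "k \<in> {1..2*g}"
  shows "((\<lambda>t. vector_derivative (p k u) (at t within {0..1}) *
            (((2 * of_nat g - 1) + (\<Sum>i\<in>{2..2*g+1}. u i / (p k u t - u i))) / s k u t)) has_integral 0) {0..1}"
proof -
  have j: "2 \<in> {2..2*g+1}" using g by simp
  obtain N r where co: "cons_ok g p s u 2 k N r" using construct2[OF u j k] by blast
  note co' = co[unfolded cons_ok_def]
  have N: "N > 0" using co' by blast
  have r: "r > 0" using co' by blast
  note hb = co'[THEN conjunct2, THEN conjunct2, THEN conjunct1, rule_format]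
  note cc = co'[THEN conjunct2, THEN conjunct2, THEN conjunct2, THEN conjunct1, rule_format]
  note ins = co'[THEN conjunct2, THEN conjunct2, THEN conjunct2, THEN conjunct2, THEN conjunct1, rule_format]
  note ev = co'[THEN conjunct2, THEN conjunct2, THEN conjunct2, THEN conjunct2, THEN conjunct2]
  note L = loop[OF u k]
  define I where "I = {1..2*g+1}"
  define c where "c m = p k u (real m/N)" for m
  define F where "F m = bsq (branch u) I (c m) (s k u (real m/N))" for m
  define hs where "hs x = (2 * of_nat g - 1) + (\<Sum>i\<in>{2..2*g+1}. u i / (x - u i))" for x
  define \<Lambda> where "\<Lambda> t = - 2 * p k u t / s k u t" for t
  have t01: "real m / N \<in> {0..1}" if "m \<le> N" for m using that N by (auto simp: field_simps)
  have hb1: "\<forall>i\<in>I. r \<le> norm (c m - branch u i)" if "m \<le> N" for m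
    using hb[OF that] r unfolding c_def I_def by force
  have far: "r < norm (x - branch u i)" if "m \<le> N" "x \<in> ball (c m) r" "i \<in> I" for m x i
  proof -
    have "norm (c m - branch u i) \<le> norm (c m - x) + norm (x - branch u i)"
      using norm_triangle_ineq[of "c m - x" "x - branch u i"] by simp
    moreover have "norm (c m - x) < r" using that(2) by (simp add: dist_norm)
    ultimately show ?thesis using hb[OF that(1)] that(3) unfolding c_def I_def by force
  qed
  have pc: "((\<lambda>t. vector_derivative (p k u) (at t within {0..1}) * (hs (p k u t) / s k u t)) has_integral
             \<Lambda> (real (Suc m) / N) - \<Lambda> (real m / N)) {real m / N .. real (Suc m) / N}" if m: "m < N" for m
  proof -
    have iv: "0 \<le> real m / N" "real m / N \<le> real (Suc m) / N" "real (Suc m) / N \<le> 1"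
      using t01[of m] t01[of "Suc m"] m N by (auto simp: divide_right_mono)
    have Fd: "(F m has_field_derivative F m x * (\<Sum>i\<in>I. 1 / (2 * (x - branch u i)))) (at x)"
      if x: "x \<in> ball (c m) r" for x
      unfolding F_def by (rule bsq_deriv[OF _ hb1[of m] x]) (use m in \<open>auto simp: I_def\<close>)
    have Fnz: "F m x \<noteq> 0" if x: "x \<in> ball (c m) r" for x
      unfolding F_def by (rule bsq_nz[OF _ hb1[of m] L(7)[OF t01[of m]] x]) (use m in \<open>auto simp: I_def\<close>)
    have D: "\<forall>x\<in>ball (c m) r. ((\<lambda>x. - 2 * x / F m x) has_field_derivative hs x / F m x) (at x)"
    proof
      fix x assume x: "x \<in> ball (c m) r"
      have xb: "x \<noteq> branch u i" if "i \<in> I" for i using far[of m x i] m x that r by auto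
      have x0: "x \<noteq> 0" using xb[of 1] unfolding I_def by (simp add: branch_def)
      have xu: "\<forall>i\<in>{2..2*g+1}. x \<noteq> u i"
      proof
        fix i assume i: "i \<in> {2..2*g+1}"
        then have "i \<in> I" "i \<noteq> 1" unfolding I_def by auto
        then show "x \<noteq> u i" using xb[of i] by (simp add: branch_def)
      qed
      define S where "S = (\<Sum>i\<in>I. 1 / (2 * (x - branch u i)))"
      have "((\<lambda>x. - 2 * x / F m x) has_field_derivative
              ((- 2) * F m x - (- 2 * x) * (F m x * S)) / (F m x * F m x)) (at x)"
        using DERIV_divide[OF DERIV_cmult[OF DERIV_ident, of "-2"] Fd[OF x[unfolded S_def[symmetric]]]] Fnz[OF x]
        unfolding S_def by simp
      moreover have "((- 2) * F m x - (- 2 * x) * (F m x * S)) / (F m x * F m x) = (-2 + 2 * x * S) / F m x"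
        using Fnz[OF x] by (simp add: field_simps)
      moreover have "-2 + 2 * x * S = hs x" unfolding S_def hs_def I_def by (rule hsum_id[OF x0 xu])
      ultimately show "((\<lambda>x. - 2 * x / F m x) has_field_derivative hs x / F m x) (at x)" by simp
    qed
    have "((\<lambda>t. vector_derivative (p k u) (at t within {0..1}) * (hs (p k u t) / s k u t)) has_integral
             (\<lambda>x. - 2 * x / F m x) (p k u (real (Suc m) / N)) - (\<lambda>x. - 2 * x / F m x) (p k u (real m / N)))
             {real m / N .. real (Suc m) / N}"
    proof (rule piece[OF L(1) iv open_ball _ D])
      show "p k u ` {real m / N .. real (Suc m) / N} \<subseteq> ball (c m) r"
      proof (rule image_subsetI)
        fix t assume t: "t \<in> {real m / N .. real (Suc m) / N}"
        show "p k u t \<in> ball (c m) r" using ins[OF m t] unfolding c_def by simp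
      qed
      show "\<forall>t\<in>{real m / N .. real (Suc m) / N}. hs (p k u t) / s k u t = hs (p k u t) / F m (p k u t)"
      proof
        fix t assume t: "t \<in> {real m / N .. real (Suc m) / N}"
        have "s k u t = F m (p k u t)" using ins[OF m t] unfolding F_def c_def I_def by simp
        then show "hs (p k u t) / s k u t = hs (p k u t) / F m (p k u t)" by simp
      qed
    qed
    moreover have "F m (p k u (real (Suc m) / N)) = s k u (real (Suc m) / N)"
      using ins[OF m, of "real (Suc m) / N"] iv unfolding F_def c_def I_def by simp
    moreover have "F m (p k u (real m / N)) = s k u (real m / N)"
      using ins[OF m, of "real m / N"] iv unfolding F_def c_def I_def by simp
    ultimately show ?thesis unfolding \<Lambda>_def by simp
  qed
  have "((\<lambda>t. vector_derivative (p k u) (at t within {0..1}) * (hs (p k u t) / s k u t)) has_integral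
         (\<Sum>m<N. \<Lambda> (real (Suc m) / N) - \<Lambda> (real m / N))) {0..1}"
    by (rule glue[OF N pc])
  moreover have "(\<Sum>m<N. \<Lambda> (real (Suc m) / N) - \<Lambda> (real m / N)) = \<Lambda> (real N / N) - \<Lambda> (real 0 / N)"
    by (rule sum_lessThan_telescope[of "\<lambda>m. \<Lambda> (real m / N)"])
  moreover have "\<Lambda> (real N / N) - \<Lambda> (real 0 / N) = 0" using N L(2) L(4) unfolding \<Lambda>_def by simp
  ultimately show ?thesis unfolding hs_def by simp
qed

end

lemma Per_half: "Per (\<lambda>x. 1 / (2 * (x - z))) q w = Per (\<lambda>x. 1 / (x - z)) q w / 2"
proof -
  have "Per (\<lambda>x. 1 / (2 * (x - z))) q w = integral {0..1} (\<lambda>t. (1/2) * (vector_derivative q (at t within {0..1}) * (1 / (q t - z) / w t)))"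
    unfolding Per_def by (rule integral_cong) (simp add: field_simps)
  also have "\<dots> = (1/2) * integral {0..1} (\<lambda>t. vector_derivative q (at t within {0..1}) * (1 / (q t - z) / w t))"
    by (rule integral_mult_right)
  also have "\<dots> = Per (\<lambda>x. 1 / (x - z)) q w / 2" unfolding Per_def by simp
  finally show ?thesis .
qed

lemma pf:
  fixes a b w v :: complex
  assumes "a \<noteq> 0" "b \<noteq> 0" "w \<noteq> 0" "b - a \<noteq> 0"
  shows "(1 / (2 * (b - a))) * (v * (1 / a / w) - v * (1 / b / w)) = v * (1 / a / (2 * b) / w)"
proof -
  have "v * (1 / a / w) - v * (1 / b / w) = v * (b - a) / (a * b * w)" using assms by (simp add: field_simps)
  then show ?thesis using assms by (simp add: field_simps)
qed

context hsetup begin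

lemma dP:
  assumes u: "u \<in> U" and j: "j \<in> {2..2*g+1}" and k: "k \<in> {1..2*g}"
  shows "((\<lambda>z. period (p k (u(j:=z))) (s k (u(j:=z)))) has_field_derivative
           period_pole (p k u) (s k u) (u j) / 2) (at (u j))"
proof -
  have "((\<lambda>z. Per (\<lambda>_. 1) (p k (u(j:=z))) (s k (u(j:=z)))) has_field_derivative
           Per (\<lambda>x. (\<lambda>_. 1) x / (2*(x - u j))) (p k u) (s k u)) (at (u j))"
    by (rule deriv_Per[OF u j k]) (rule holomorphic_on_const)
  then have D: "((\<lambda>z. Per (\<lambda>_. 1) (p k (u(j:=z))) (s k (u(j:=z)))) has_field_derivative
           Per (\<lambda>x. 1 / (2*(x - u j))) (p k u) (s k u)) (at (u j))" by simp
  show ?thesis using D unfolding Per_half period_Per period_pole_Per .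
qed

lemma Qint:
  assumes g: "g \<ge> 1" and u: "u \<in> U" and k: "k \<in> {1..2*g}" and i: "i \<in> {1..2*g+1}"
  shows "((\<lambda>t. vector_derivative (p k u) (at t within {0..1}) * ((\<lambda>x. 1 / (x - branch u i)) (p k u t) / s k u t)) has_integral
           period_pole (p k u) (s k u) (branch u i)) {0..1}"
  unfolding period_pole_Per
proof (rule Per_has_integral[OF g u k])
  show "(\<lambda>x. 1 / (x - branch u i)) holomorphic_on - branch u ` {1..2 * g + 1}"
    using i by (intro holomorphic_intros) auto
qed

lemma Pint:
  assumes g: "g \<ge> 1" and u: "u \<in> U" and k: "k \<in> {1..2*g}"
  shows "((\<lambda>t. vector_derivative (p k u) (at t within {0..1}) * ((\<lambda>x. 1) (p k u t) / s k u t)) has_integral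
           period (p k u) (s k u)) {0..1}"
  unfolding period_Per by (rule Per_has_integral[OF g u k holomorphic_on_const])

lemma dQ:
  assumes g: "g \<ge> 1" and u: "u \<in> U" and j: "j \<in> {2..2*g+1}" and k: "k \<in> {1..2*g}"
    and i: "i \<in> {2..2*g+1}" and ij: "i \<noteq> j" and dist: "u i \<noteq> u j"
  shows "((\<lambda>z. period_pole (p k (u(j:=z))) (s k (u(j:=z))) (u i)) has_field_derivative
           (period_pole (p k u) (s k u) (u i) - period_pole (p k u) (s k u) (u j)) / (2 * (u i - u j))) (at (u j))"
proof -
  have "((\<lambda>z. Per (\<lambda>x. 1 / (x - u i)) (p k (u(j:=z))) (s k (u(j:=z)))) has_field_derivative
           Per (\<lambda>x. 1 / (x - u i) / (2*(x - u j))) (p k u) (s k u)) (at (u j))"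
  proof (rule deriv_Per[OF u j k])
    have "x - u i \<noteq> 0" if "x \<in> -(branch u ` ({1..2*g+1} - {j}))" for x
    proof -
      have "u i = branch u i" using i by (simp add: branch_def)
      moreover have "i \<in> {1..2*g+1} - {j}" using i ij by auto
      ultimately show ?thesis using that by auto
    qed
    then show "(\<lambda>x. 1 / (x - u i)) holomorphic_on -(branch u ` ({1..2*g+1} - {j}))"
      by (intro holomorphic_intros) auto
  qed
  moreover have "Per (\<lambda>x. 1 / (x - u i) / (2*(x - u j))) (p k u) (s k u) =
      (period_pole (p k u) (s k u) (u i) - period_pole (p k u) (s k u) (u j)) / (2 * (u i - u j))"
  proof -
    have bi: "branch u i = u i" "branch u j = u j" using i j by (auto simp: branch_def)
    have iI: "i \<in> {1..2*g+1}" "j \<in> {1..2*g+1}" using i j by auto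
    have Qi: "((\<lambda>t. vector_derivative (p k u) (at t within {0..1}) * (1 / (p k u t - u i) / s k u t)) has_integral
           period_pole (p k u) (s k u) (u i)) {0..1}" using Qint[OF g u k iI(1)] bi by simp
    have Qj: "((\<lambda>t. vector_derivative (p k u) (at t within {0..1}) * (1 / (p k u t - u j) / s k u t)) has_integral
           period_pole (p k u) (s k u) (u j)) {0..1}" using Qint[OF g u k iI(2)] bi by simp
    define C where "C = 1 / (2 * (u i - u j))"
    have "((\<lambda>t. C * (vector_derivative (p k u) (at t within {0..1}) * (1 / (p k u t - u i) / s k u t)
                 - vector_derivative (p k u) (at t within {0..1}) * (1 / (p k u t - u j) / s k u t))) has_integral
          C * (period_pole (p k u) (s k u) (u i) - period_pole (p k u) (s k u) (u j))) {0..1}"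
      by (rule has_integral_mult_right[OF has_integral_diff[OF Qi Qj]])
    note int = this
    have pw: "C * (vector_derivative (p k u) (at t within {0..1}) * (1 / (p k u t - u i) / s k u t)
                 - vector_derivative (p k u) (at t within {0..1}) * (1 / (p k u t - u j) / s k u t))
        = vector_derivative (p k u) (at t within {0..1}) * (1 / (p k u t - u i) / (2 * (p k u t - u j)) / s k u t)"
      if t: "t \<in> {0..1}" for t
    proof -
      have a: "p k u t - u i \<noteq> 0" "p k u t - u j \<noteq> 0" "s k u t \<noteq> 0"
        using loop(6)[OF u k t iI(1)] loop(6)[OF u k t iI(2)] loop(7)[OF u k t] bi by auto
      have b: "u i - u j \<noteq> 0" using dist by simp
      have "p k u t - u j - (p k u t - u i) = u i - u j" by simp
      then show ?thesis unfolding C_def using pf[of "p k u t - u i" "p k u t - u j" "s k u t" "vector_derivative (p k u) (at t within {0..1})"] a b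
        by simp
    qed
    have X: "((\<lambda>t. vector_derivative (p k u) (at t within {0..1}) * (1 / (p k u t - u i) / (2 * (p k u t - u j)) / s k u t))
        has_integral C * (period_pole (p k u) (s k u) (u i) - period_pole (p k u) (s k u) (u j))) {0..1}"
      using has_integral_eq[OF pw int] .
    show ?thesis unfolding Per_def using integral_unique[OF X] unfolding C_def by simp
  qed
  moreover have "(\<lambda>z. Per (\<lambda>x. 1 / (x - u i)) (p k (u(j:=z))) (s k (u(j:=z)))) =
                 (\<lambda>z. period_pole (p k (u(j:=z))) (s k (u(j:=z))) (u i))"
    by (simp add: period_pole_Per)
  ultimately show ?thesis by simp
qed

lemma sumPQ:
  assumes g: "g \<ge> 1" and u: "u \<in> U" and k: "k \<in> {1..2*g}"
  shows "(2 * of_nat g - 1) * period (p k u) (s k u) + (\<Sum>i\<in>{2..2*g+1}. u i * period_pole (p k u) (s k u) (u i)) = 0"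
proof -
  define vd where "vd t = vector_derivative (p k u) (at t within {0..1})" for t
  have Qi: "((\<lambda>t. vd t * (1 / (p k u t - u i) / s k u t)) has_integral period_pole (p k u) (s k u) (u i)) {0..1}"
    if i: "i \<in> {2..2*g+1}" for i
    using Qint[OF g u k, of i] i unfolding vd_def by (simp add: branch_def)
  have P: "((\<lambda>t. vd t * (1 / s k u t)) has_integral period (p k u) (s k u)) {0..1}"
    using Pint[OF g u k] unfolding vd_def by simp
  have S: "((\<lambda>t. (2 * of_nat g - 1) * (vd t * (1 / s k u t)) + (\<Sum>i\<in>{2..2*g+1}. u i * (vd t * (1 / (p k u t - u i) / s k u t))))
      has_integral ((2 * of_nat g - 1) * period (p k u) (s k u) + (\<Sum>i\<in>{2..2*g+1}. u i * period_pole (p k u) (s k u) (u i)))) {0..1}"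
    by (intro has_integral_add has_integral_mult_right P has_integral_sum finite_atLeastAtMost Qi) auto
  have Z: "((\<lambda>t. vd t * (((2 * of_nat g - 1) + (\<Sum>i\<in>{2..2*g+1}. u i / (p k u t - u i))) / s k u t)) has_integral 0) {0..1}"
    using Per_hsum_zero[OF g u k] unfolding vd_def .
  have eq: "(2 * of_nat g - 1) * (vd t * (1 / s k u t)) + (\<Sum>i\<in>{2..2*g+1}. u i * (vd t * (1 / (p k u t - u i) / s k u t)))
      = vd t * (((2 * of_nat g - 1) + (\<Sum>i\<in>{2..2*g+1}. u i / (p k u t - u i))) / s k u t)" for t
    by (simp add: divide_inverse sum_distrib_left sum_distrib_right distrib_left distrib_right mult_ac)
  from S have "((\<lambda>t. vd t * (((2 * of_nat g - 1) + (\<Sum>i\<in>{2..2*g+1}. u i / (p k u t - u i))) / s k u t)) has_integral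
      ((2 * of_nat g - 1) * period (p k u) (s k u) + (\<Sum>i\<in>{2..2*g+1}. u i * period_pole (p k u) (s k u) (u i)))) {0..1}"
    unfolding eq .
  from has_integral_unique[OF this Z] show ?thesis .
qed

end

theorem theorem2:
  fixes g :: nat
    and U :: "(nat \<Rightarrow> complex) set"
    and p s :: "nat \<Rightarrow> (nat \<Rightarrow> complex) \<Rightarrow> real \<Rightarrow> complex"
    and c :: "nat \<Rightarrow> complex"
  assumes g: "g \<ge> 1"
    and U_open: "open U"
    and U_nonzero: "\<And>u i. u \<in> U \<Longrightarrow> i \<in> {2..2*g+1} \<Longrightarrow> u i \<noteq> 0"
    and U_distinct: "\<And>u i j. u \<in> U \<Longrightarrow> i \<in> {2..2*g+1} \<Longrightarrow> j \<in> {2..2*g+1}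
                        \<Longrightarrow> i \<noteq> j \<Longrightarrow> u i \<noteq> u j"
    and cycles: "\<And>u k. u \<in> U \<Longrightarrow> k \<in> {1..2*g} \<Longrightarrow> lifted_cycle g u (p k u) (s k u)"
    and cont_p: "\<And>k. k \<in> {1..2*g} \<Longrightarrow> continuous_on (U \<times> {0..1}) (\<lambda>x. p k (fst x) (snd x))"
    and cont_s: "\<And>k. k \<in> {1..2*g} \<Longrightarrow> continuous_on (U \<times> {0..1}) (\<lambda>x. s k (fst x) (snd x))"
  shows "(\<forall>u\<in>U. \<forall>i\<in>{1..2*g+1}. \<forall>j\<in>{2..2*g+1}. i \<noteq> j \<longrightarrow>
            ((\<lambda>z. acoef g p s c (u(j := z)) i) has_field_derivative
               (2 * (alpha j * acoef g p s c u i - alpha i * acoef g p s c u j)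
                  / (branch u j - branch u i))) (at (u j)))
       \<and> (\<forall>u\<in>U. (\<Sum>i\<in>{1..2*g+1}. acoef g p s c u i) = 0)
       \<and> (\<forall>u\<in>U. \<forall>j\<in>{2..2*g+1}.
            ((\<lambda>z. acoef g p s c (u(j := z)) 1) has_field_derivative
               (- (acoef g p s c u 1 + acoef g p s c u j) / (2 * u j))) (at (u j)))
       \<and> (\<forall>u\<in>U. \<forall>i\<in>{2..2*g+1}. \<forall>j\<in>{2..2*g+1}. i \<noteq> j \<longrightarrow>
            ((\<lambda>z. acoef g p s c (u(j := z)) i) has_field_derivative
               ((acoef g p s c u j - acoef g p s c u i) / (2 * (u j - u i)))) (at (u j)))"
proof -
  interpret hsetup g U p s using U_open cycles cont_p cont_s by unfold_locales auto
  define P where "P k w = period (p k w) (s k w)" for k w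
  define Q where "Q k w z = period_pole (p k w) (s k w) z" for k w z
  define AP where "AP w = (\<Sum>k\<in>{1..2*g}. c k * P k w)" for w
  define AQ where "AQ w z = (\<Sum>k\<in>{1..2*g}. c k * Q k w z)" for w z
  have acoef_eq: "acoef g p s c w i = (if i = 1 then - AP w else AP w + w i * AQ w (w i))" for w i
    unfolding acoef_def AP_def AQ_def P_def Q_def by simp
  have C3: "((\<lambda>z. acoef g p s c (u(j := z)) 1) has_field_derivative
               (- (acoef g p s c u 1 + acoef g p s c u j) / (2 * u j))) (at (u j))"
    if u: "u \<in> U" and j: "j \<in> {2..2*g+1}" for u j
  proof -
    have dk: "((\<lambda>z. c k * P k (u(j:=z))) has_field_derivative c k * (Q k u (u j) / 2)) (at (u j))"
      if k: "k \<in> {1..2*g}" for k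
      unfolding P_def Q_def by (rule DERIV_cmult[OF dP[OF u j k]])
    have "((\<lambda>z. - AP (u(j:=z))) has_field_derivative - (\<Sum>k\<in>{1..2*g}. c k * (Q k u (u j) / 2))) (at (u j))"
      unfolding AP_def by (intro DERIV_minus DERIV_sum dk)
    moreover have "(\<lambda>z. acoef g p s c (u(j := z)) 1) = (\<lambda>z. - AP (u(j:=z)))"
      by (simp add: acoef_eq)
    moreover have "- (\<Sum>k\<in>{1..2*g}. c k * (Q k u (u j) / 2)) = - (acoef g p s c u 1 + acoef g p s c u j) / (2 * u j)"
    proof -
      have j1: "j \<noteq> 1" using j by auto
      have uj: "u j \<noteq> 0" using U_nonzero[OF u j] .
      have "(\<Sum>k\<in>{1..2*g}. c k * (Q k u (u j) / 2)) = AQ u (u j) / 2"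
        unfolding AQ_def by (simp add: sum_divide_distrib)
      moreover have "acoef g p s c u 1 + acoef g p s c u j = u j * AQ u (u j)"
        using j1 by (simp add: acoef_eq)
      ultimately show ?thesis using uj by (simp add: field_simps)
    qed
    ultimately show ?thesis by simp
  qed
  have C4: "((\<lambda>z. acoef g p s c (u(j := z)) i) has_field_derivative
               ((acoef g p s c u j - acoef g p s c u i) / (2 * (u j - u i)))) (at (u j))"
    if u: "u \<in> U" and i: "i \<in> {2..2*g+1}" and j: "j \<in> {2..2*g+1}" and ij: "i \<noteq> j" for u i j
  proof -
    have dis: "u i \<noteq> u j" using U_distinct[OF u i j ij] .
    define D where "D = 2 * (u i - u j)"
    have dk: "((\<lambda>z. c k * P k (u(j:=z))) has_field_derivative c k * (Q k u (u j) / 2)) (at (u j))"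
      if k: "k \<in> {1..2*g}" for k
      unfolding P_def Q_def by (rule DERIV_cmult[OF dP[OF u j k]])
    have dq: "((\<lambda>z. c k * Q k (u(j:=z)) (u i)) has_field_derivative c k * ((Q k u (u i) - Q k u (u j)) / D)) (at (u j))"
      if k: "k \<in> {1..2*g}" for k
      unfolding Q_def D_def by (rule DERIV_cmult[OF dQ[OF g u j k i ij dis]])
    have "((\<lambda>z. AP (u(j:=z)) + u i * AQ (u(j:=z)) (u i)) has_field_derivative
            (\<Sum>k\<in>{1..2*g}. c k * (Q k u (u j) / 2)) + u i * (\<Sum>k\<in>{1..2*g}. c k * ((Q k u (u i) - Q k u (u j)) / D))) (at (u j))"
      unfolding AP_def AQ_def by (intro DERIV_add DERIV_cmult DERIV_sum dk dq)
    moreover have "(\<lambda>z. acoef g p s c (u(j := z)) i) = (\<lambda>z. AP (u(j:=z)) + u i * AQ (u(j:=z)) (u i))"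
      using i ij by (auto simp: acoef_eq)
    moreover have "(\<Sum>k\<in>{1..2*g}. c k * (Q k u (u j) / 2)) + u i * (\<Sum>k\<in>{1..2*g}. c k * ((Q k u (u i) - Q k u (u j)) / D))
        = (acoef g p s c u j - acoef g p s c u i) / (2 * (u j - u i))"
    proof -
      have s1: "(\<Sum>k\<in>{1..2*g}. c k * (Q k u (u j) / 2)) = AQ u (u j) / 2"
        unfolding AQ_def by (simp add: sum_divide_distrib)
      have s2: "(\<Sum>k\<in>{1..2*g}. c k * ((Q k u (u i) - Q k u (u j)) / D)) = (AQ u (u i) - AQ u (u j)) / D"
        unfolding AQ_def by (simp add: sum_divide_distrib right_diff_distrib sum_subtractf diff_divide_distrib)
      have a: "acoef g p s c u j = AP u + u j * AQ u (u j)" "acoef g p s c u i = AP u + u i * AQ u (u i)"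
        using i j by (auto simp: acoef_eq)
      have d1: "u i - u j \<noteq> 0" "u j - u i \<noteq> 0" using dis by auto
      show ?thesis unfolding s1 s2 a unfolding D_def using d1 by (simp add: field_simps)
    qed
    ultimately show ?thesis by simp
  qed
  show ?thesis
  proof (intro conjI ballI impI)
    fix u i j assume u: "u \<in> U" and i: "i \<in> {1..2*g+1}" and j: "j \<in> {2..2*g+1}" and ij: "i \<noteq> j"
    show "((\<lambda>z. acoef g p s c (u(j := z)) i) has_field_derivative
            2 * (alpha j * acoef g p s c u i - alpha i * acoef g p s c u j) / (branch u j - branch u i)) (at (u j))"
    proof (cases "i = 1")
      case True
      have "2 * (alpha j * acoef g p s c u i - alpha i * acoef g p s c u j) / (branch u j - branch u i)
          = - (acoef g p s c u 1 + acoef g p s c u j) / (2 * u j)"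
        using True j U_nonzero[OF u j] by (auto simp: alpha_def branch_def field_simps)
      then show ?thesis using C3[OF u j] True by simp
    next
      case False
      then have i2: "i \<in> {2..2*g+1}" using i by auto
      have "2 * (alpha j * acoef g p s c u i - alpha i * acoef g p s c u j) / (branch u j - branch u i)
          = (acoef g p s c u j - acoef g p s c u i) / (2 * (u j - u i))"
        using False j i2 U_distinct[OF u j i2] ij by (auto simp: alpha_def branch_def field_simps)
      then show ?thesis using C4[OF u i2 j ij] by simp
    qed
  next
    fix u assume u: "u \<in> U"
    have I: "{1..2*g+1} = insert 1 {2..2*g+1}" by auto
    have "(\<Sum>i\<in>{1..2*g+1}. acoef g p s c u i) = - AP u + (\<Sum>i\<in>{2..2*g+1}. AP u + u i * AQ u (u i))"
      unfolding I by (simp add: acoef_eq)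
    also have "\<dots> = (2 * of_nat g - 1) * AP u + (\<Sum>i\<in>{2..2*g+1}. u i * AQ u (u i))"
      by (simp add: sum.distrib algebra_simps)
    also have "\<dots> = (\<Sum>k\<in>{1..2*g}. c k * ((2 * of_nat g - 1) * P k u + (\<Sum>i\<in>{2..2*g+1}. u i * Q k u (u i))))"
    proof -
      define A :: complex where "A = 2 * of_nat g - 1"
      define J where "J = {2..2*g+1}"
      define K where "K = {1..2*g}"
      have e1: "(\<Sum>k\<in>K. c k * (A * P k u + (\<Sum>i\<in>J. u i * Q k u (u i))))
          = (\<Sum>k\<in>K. A * (c k * P k u)) + (\<Sum>k\<in>K. \<Sum>i\<in>J. u i * (c k * Q k u (u i)))"
        by (simp add: sum.distrib distrib_left sum_distrib_left mult_ac)
      have e2: "(\<Sum>k\<in>K. \<Sum>i\<in>J. u i * (c k * Q k u (u i))) = (\<Sum>i\<in>J. \<Sum>k\<in>K. u i * (c k * Q k u (u i)))"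
        by (rule sum.swap)
      have e3: "(\<Sum>i\<in>J. \<Sum>k\<in>K. u i * (c k * Q k u (u i))) = (\<Sum>i\<in>J. u i * AQ u (u i))"
        unfolding AQ_def K_def by (simp add: sum_distrib_left)
      have e4: "(\<Sum>k\<in>K. A * (c k * P k u)) = A * AP u" unfolding AP_def K_def by (simp add: sum_distrib_left)
      show ?thesis using e1 e2 e3 e4 unfolding A_def J_def K_def by simp
    qed
    also have "\<dots> = 0"
      using sumPQ[OF g u] unfolding P_def Q_def by simp
    finally show "(\<Sum>i\<in>{1..2*g+1}. acoef g p s c u i) = 0" .
  next
    fix u j assume u: "u \<in> U" and j: "j \<in> {2..2*g+1}"
    show "((\<lambda>z. acoef g p s c (u(j := z)) 1) has_field_derivative
            - (acoef g p s c u 1 + acoef g p s c u j) / (2 * u j)) (at (u j))" by (rule C3[OF u j])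
  next
    fix u i j assume u: "u \<in> U" and i: "i \<in> {2..2*g+1}" and j: "j \<in> {2..2*g+1}" and ij: "i \<noteq> j"
    show "((\<lambda>z. acoef g p s c (u(j := z)) i) has_field_derivative
            (acoef g p s c u j - acoef g p s c u i) / (2 * (u j - u i))) (at (u j))" by (rule C4[OF u i j ij])
  qed
qed

end
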